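(* Let $J\in\mathbb{R}^{m\times n}$ have full column rank, let $H\in\mathbb{R}^{m\times m}$ be symmetric positive definite, $q\in\mathbb{R}^m$, $c\in\mathbb{R}$, and consider minimizing $L(\theta)=\mathcal{L}(J\theta)$ with $\mathcal{L}(v)=\tfrac12 v^\top Hv+v^\top q+c$. Assume strong consistency: (1) there is $\theta^*$ with $J\theta^*=\arg\min_v\mathcal{L}(v)$, and (2) $\mathrm{range}(HJ)\subseteq\mathrm{range}(J)$. Consider SNGD $$\theta_{t+1}=\theta_t-\eta\,J_S^{+(\lambda)}(H_SJ\theta_t+q_S)$$ with batch size $k$ and regularization $\lambda\ge 0$, where at each iteration $S\subseteq\{1,\dots,m\}$, $|S|=k$, is drawn uniformly without replacement, independently across iterations. Let $P(S)=J_S^{+(\lambda)}J_S$, $\overline{P}=\mathbb{E}_S[P(S)]$, $\alpha=\lambda_{\min}(\overline{P})$, and assume $\overline{P}$ is nonsingular and shares an eigenbasis with $J^\top J$. Define the positive definite matrix $\overline{Q}=(J^\top J)^{-1/2}\overline{P}(J^\top J)^{-1/2}$, the matrix $\tilde H=(J^\top J)^{-1/2}J^\top HJ(J^\top J)^{-1/2}$, and $$\gamma=1\Big/\lambda_{\max}\Big(\mathbb{E}_S\big[(J^\top J)^{-1/2}P(S)\overline{Q}^{-1}P(S)(J^\top J)^{-1/2}\big]\Big).$$ Then $\gamma\ge\kappa^{-1}(\overline{Q})$, and with step size $\eta=\gamma/\lambda_{\max}(\tilde H)$ the SNGD iterates satisfy $$\mathbb{E}\,\|\theta_t-\theta^*\|^2_{\overline{Q}^{-1}}\le\big(1-\kappa^{-1}(\tilde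 H)\cdot\alpha\cdot\gamma\big)^t\,\|\theta_0-\theta^*\|^2_{\overline{Q}^{-1}} .$$
   Context: $J_S$, $H_S$ denote rows of $J$, $H$ indexed by $S$; $q_S$ the corresponding entries of $q$. $J_S^{+(\lambda)}=(J_S^\top J_S+\lambda I)^{-1}J_S^\top=J_S^\top(J_SJ_S^\top+\lambda I)^{-1}$ (Moore–Penrose pseudoinverse when $\lambda=0$). $\kappa(A)$ denotes the condition number $\lambda_{\max}(A)/\lambda_{\min}(A)$ of a symmetric positive definite matrix, and $\|x\|_A^2=x^\top Ax$. *)

theory Defs
  imports "HOL-Analysis.Analysis"
begin

(* Matrices are HOL-Analysis Cartesian matrices: real^'n^'m is an m x n matrix
   (rows indexed by 'm, columns by 'n). *)

definition sym_mat :: "real^'n^'n \<Rightarrow> bool" where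
  "sym_mat A \<longleftrightarrow> transpose A = A"

definition posdef :: "real^'n^'n \<Rightarrow> bool" where
  "posdef A \<longleftrightarrow> sym_mat A \<and> (\<forall>x. x \<noteq> 0 \<longrightarrow> x \<bullet> (A *v x) > 0)"

definition eigenvalues :: "real^'n^'n \<Rightarrow> real set" where
  "eigenvalues A = {\<mu>. \<exists>v. v \<noteq> 0 \<and> A *v v = \<mu> *\<^sub>R v}"

definition lambda_max :: "real^'n^'n \<Rightarrow> real" where
  "lambda_max A = Max (eigenvalues A)"

definition lambda_min :: "real^'n^'n \<Rightarrow> real" where
  "lambda_min A = Min (eigenvalues A)"

definition kappa :: "real^'n^'n \<Rightarrow> real" where
  "kappa A = lambda_max A / lambda_min A"

definition sqnorm_in :: "real^'n^'n \<Rightarrow> real^'n \<Rightarrow> real" where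
  "sqnorm_in A x = x \<bullet> (A *v x)"

definition msqrt :: "real^'n^'n \<Rightarrow> real^'n^'n" where
  "msqrt A = (THE R. posdef R \<and> R ** R = A)"

definition pinv :: "real^'n^'m \<Rightarrow> real^'m^'n" where
  "pinv A = (THE X. A ** X ** A = A \<and> X ** A ** X = X \<and>
                    transpose (A ** X) = A ** X \<and> transpose (X ** A) = X ** A)"

definition rpinv :: "real \<Rightarrow> real^'n^'m \<Rightarrow> real^'m^'n" where
  "rpinv lam A = (if lam = 0 then pinv A
                  else matrix_inv (transpose A ** A + lam *\<^sub>R mat 1) ** transpose A)"

(* diagonal 0/1 row selector for the index set S; rowsel S ** J is J_S padded by zero rows *)
definition rowsel :: "'m set \<Rightarrow> real^'m^'m" where
  "rowsel S = (\<chi> i j. if i = j \<and> i \<in> S then 1 else 0)"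

(* J_S^{+(lambda)} realised on the zero-padded m-dimensional representation *)
definition JS_rpinv :: "real \<Rightarrow> real^'n^'m \<Rightarrow> 'm set \<Rightarrow> real^'m^'n" where
  "JS_rpinv lam J S = rpinv lam (rowsel S ** J)"

definition projP :: "real \<Rightarrow> real^'n^'m \<Rightarrow> 'm set \<Rightarrow> real^'n^'n" where
  "projP lam J S = JS_rpinv lam J S ** (rowsel S ** J)"

definition batches :: "nat \<Rightarrow> 'm::finite set set" where
  "batches k = {S. card S = k}"

definition ES :: "nat \<Rightarrow> ('m::finite set \<Rightarrow> 'a::real_vector) \<Rightarrow> 'a" where
  "ES k f = (1 / real (card (batches k :: 'm set set))) *\<^sub>R (\<Sum>S\<in>batches k. f S)"

definition sngd_step :: "real \<Rightarrow> real \<Rightarrow> real^'n^'m \<Rightarrow> real^'m^'m \<Rightarrow> real^'m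
                          \<Rightarrow> 'm set \<Rightarrow> real^'n \<Rightarrow> real^'n" where
  "sngd_step eta lam J H q S th =
     th - eta *\<^sub>R (JS_rpinv lam J S *v (rowsel S *v (H *v (J *v th) + q)))"

fun sngd_iter :: "real \<Rightarrow> real \<Rightarrow> real^'n^'m \<Rightarrow> real^'m^'m \<Rightarrow> real^'m
                   \<Rightarrow> 'm set list \<Rightarrow> real^'n \<Rightarrow> real^'n" where
  "sngd_iter eta lam J H q [] th = th"
| "sngd_iter eta lam J H q (S # Ss) th = sngd_iter eta lam J H q Ss (sngd_step eta lam J H q S th)"

(* expectation over t i.i.d. uniform batches of size k: average over all length-t batch sequences *)
definition E_seq :: "nat \<Rightarrow> nat \<Rightarrow> ('m::finite set list \<Rightarrow> real) \<Rightarrow> real" where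
  "E_seq k t f = (\<Sum>Ss\<in>{Ss. length Ss = t \<and> set Ss \<subseteq> batches k}. f Ss)
                   / real (card (batches k :: 'm set set)) ^ t"

definition quadloss :: "real^'m^'m \<Rightarrow> real^'m \<Rightarrow> real \<Rightarrow> real^'m \<Rightarrow> real" where
  "quadloss H q c v = (1/2) * (v \<bullet> (H *v v)) + v \<bullet> q + c"

definition share_eigenbasis :: "real^'n^'n \<Rightarrow> real^'n^'n \<Rightarrow> bool" where
  "share_eigenbasis A B \<longleftrightarrow> (\<exists>Bs. independent Bs \<and> span Bs = UNIV \<and>
      (\<forall>v\<in>Bs. (\<exists>\<mu>. A *v v = \<mu> *\<^sub>R v) \<and> (\<exists>\<mu>. B *v v = \<mu> *\<^sub>R v)))"

end

theory Submission
  imports Defs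
begin

lemma inner_mv_transpose: "x \<bullet> ((A::real^'n^'m) *v y) = (transpose A *v x) \<bullet> y"
  by (metis dot_lmul_matrix inner_commute transpose_matrix_vector)

lemma sym_inner: "sym_mat A \<Longrightarrow> x \<bullet> ((A::real^'n^'n) *v y) = (A *v x) \<bullet> y"
  by (metis inner_mv_transpose sym_mat_def)

lemma sym_from_inner:
  assumes "\<And>x y. x \<bullet> ((A::real^'n^'n) *v y) = (A *v x) \<bullet> y"
  shows "sym_mat A"
proof -
  have "transpose A *v x = A *v x" for x
  proof -
    have "(transpose A *v x - A *v x) \<bullet> y = 0" for y
      using assms[of x y] inner_mv_transpose[of x A y] by (simp add: inner_diff_left)
    from this[of "transpose A *v x - A *v x"] show ?thesis by simp
  qed
  then show ?thesis unfolding sym_mat_def by (simp add: matrix_eq)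
qed

lemma minv: assumes "invertible (A::real^'n^'n)"
  shows "A ** matrix_inv A = mat 1" "matrix_inv A ** A = mat 1"
proof -
  have "\<exists>A'. A ** A' = mat 1 \<and> A' ** A = mat 1" using assms invertible_def by blast
  then have "A ** matrix_inv A = mat 1 \<and> matrix_inv A ** A = mat 1"
    unfolding matrix_inv_def by (rule someI_ex)
  then show "A ** matrix_inv A = mat 1" "matrix_inv A ** A = mat 1" by auto
qed

lemma minv_unique: assumes "(A::real^'n^'n) ** B = mat 1" shows "matrix_inv A = B"
proof -
  have BA: "B ** A = mat 1" using assms matrix_left_right_inverse by blast
  have inv: "invertible A" using assms BA invertible_def by blast
  have "matrix_inv A = matrix_inv A ** (A ** B)" by (simp add: assms)
  also have "\<dots> = B" by (simp add: matrix_mul_assoc minv[OF inv])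
  finally show ?thesis .
qed

lemma inj_invertible: assumes "inj ((*v) (A::real^'n^'n))" shows "invertible A"
  using assms invertible_left_inverse matrix_left_invertible_injective by blast

lemma invertible_minv: "invertible (A::real^'n^'n) \<Longrightarrow> invertible (matrix_inv A)"
  using minv invertible_def by blast

lemma minv_minv: "invertible (A::real^'n^'n) \<Longrightarrow> matrix_inv (matrix_inv A) = A"
  using minv minv_unique by blast

lemma minv_mul: assumes "invertible (A::real^'n^'n)" "invertible (B::real^'n^'n)"
  shows "matrix_inv (A ** B) = matrix_inv B ** matrix_inv A"
proof -
  have "A ** B ** (matrix_inv B ** matrix_inv A) = A ** (B ** matrix_inv B) ** matrix_inv A"
    by (simp add: matrix_mul_assoc)
  then have "A ** B ** (matrix_inv B ** matrix_inv A) = mat 1" by (simp add: minv[OF assms(1)] minv[OF assms(2)])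
  then show ?thesis by (rule minv_unique)
qed

lemma minv_transpose: assumes "invertible (A::real^'n^'n)"
  shows "matrix_inv (transpose A) = transpose (matrix_inv A)"
  by (metis assms matrix_transpose_mul minv(2) minv_unique transpose_mat)

lemma sym_minv: "sym_mat A \<Longrightarrow> invertible (A::real^'n^'n) \<Longrightarrow> sym_mat (matrix_inv A)"
  by (metis minv_transpose sym_mat_def)

lemma quad_zero: assumes "\<And>t::real. 2*t*a + t^2*b \<le> 0" shows "a = 0"
proof -
  define d where "d = \<bar>b\<bar> + 1"
  define t where "t = a / d"
  have pos: "d > 0" unfolding d_def by simp
  have e1: "d * t = a" unfolding t_def using pos by simp
  have h: "2*t*a + t^2*b \<le> 0" by (rule assms)
  have "d^2 * (2*t*a + t^2*b) = 2*a*(d * (d * t)) + (d * t)^2*b"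
    by (simp add: algebra_simps power2_eq_square)
  also have "\<dots> = a^2 * (2*d + b)" unfolding e1 by (simp add: algebra_simps power2_eq_square)
  finally have eq: "d^2 * (2*t*a + t^2*b) = a^2 * (2*d + b)" .
  have "d^2 * (2*t*a + t^2*b) \<le> 0" using h by (simp add: mult_nonneg_nonpos)
  then have le: "a^2 * (2*d + b) \<le> 0" using eq by simp
  have "2*d + b > 0" unfolding d_def by (simp add: abs_if)
  then have "a^2 \<le> 0" using le by (simp add: mult_le_0_iff)
  then show ?thesis by simp
qed

lemma eig_step:
  fixes A :: "real^'n^'n"
  assumes sym: "sym_mat A" and fin: "finite B"
    and eig: "\<forall>b\<in>B. \<exists>\<mu>. A *v b = \<mu> *\<^sub>R b" and lt: "card B < CARD('n)"
  shows "\<exists>v. norm v = 1 \<and> (\<forall>b\<in>B. v \<bullet> b = 0) \<and> (\<exists>\<mu>. A *v v = \<mu> *\<^sub>R v)"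
proof -
  have "dim B \<le> card B" using fin by (simp add: dim_le_card span_superset)
  then have "dim B < DIM(real^'n)" using lt by simp
  then obtain x :: "real^'n" where x: "x \<noteq> 0" "\<And>y. y \<in> span B \<Longrightarrow> orthogonal x y"
    using orthogonal_to_subspace_exists by blast
  define V where "V = {x::real^'n. \<forall>b\<in>B. x \<bullet> b = 0}"
  define K where "K = sphere (0::real^'n) 1 \<inter> V"
  have "closed {y::real^'n. y \<bullet> b = 0}" for b using closed_hyperplane[of b 0] by (simp add: inner_commute)
  then have clV: "closed V" unfolding V_def
    by (simp add: Collect_ball_eq closed_INT)
  have "compact K" unfolding K_def using clV by (simp add: compact_Int_closed)
  moreover have "x /\<^sub>R norm x \<in> K" using x unfolding K_def V_def
    by (auto simp: span_base orthogonal_def)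
  then have "K \<noteq> {}" by blast
  moreover have "continuous_on K (\<lambda>y. y \<bullet> (A *v y))"
    by (intro continuous_on_inner continuous_on_id linear_continuous_on matrix_vector_mul_bounded_linear)
  ultimately obtain v where vK: "v \<in> K" and vmax: "\<And>y. y \<in> K \<Longrightarrow> y \<bullet> (A *v y) \<le> v \<bullet> (A *v v)"
    using continuous_attains_sup by metis
  define lam where "lam = v \<bullet> (A *v v)"
  have nv: "norm v = 1" and vV: "v \<in> V" using vK unfolding K_def by auto
  have vv: "v \<bullet> v = 1" using nv by (simp add: norm_eq_1)
  have le: "y \<bullet> (A *v y) \<le> lam * (y \<bullet> y)" if "y \<in> V" for y
  proof (cases "y = 0")
    case True then show ?thesis by simp
  next
    case False
    have "y /\<^sub>R norm y \<in> K" using that False unfolding K_def V_def by auto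
    then have "(y /\<^sub>R norm y) \<bullet> (A *v (y /\<^sub>R norm y)) \<le> lam" using vmax lam_def by blast
    then have "(y \<bullet> (A *v y)) / (norm y)^2 \<le> lam"
      by (simp add: matrix_vector_mult_scaleR power2_eq_square divide_inverse mult_ac)
    then show ?thesis using False by (simp add: divide_le_eq power2_norm_eq_inner mult.commute)
  qed
  have AvV: "A *v v \<in> V" unfolding V_def
  proof (intro CollectI ballI)
    fix b assume b: "b \<in> B"
    then obtain \<mu> where "A *v b = \<mu> *\<^sub>R b" using eig by blast
    then have "(A *v v) \<bullet> b = \<mu> * (v \<bullet> b)" using sym_inner[OF sym, of b v] by (simp add: inner_commute)
    then show "(A *v v) \<bullet> b = 0" using vV b unfolding V_def by simp
  qed
  define w where "w = A *v v - lam *\<^sub>R v"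
  have wV: "w \<in> V" using AvV vV unfolding w_def V_def by (simp add: inner_diff_left)
  have "2*t*(w \<bullet> w) + t^2 * (w \<bullet> (A *v w) - lam * (w \<bullet> w)) \<le> 0" for t
  proof -
    have "v + t *\<^sub>R w \<in> V" using vV wV unfolding V_def by (simp add: inner_add_left)
    then have h1: "(v + t *\<^sub>R w) \<bullet> (A *v (v + t *\<^sub>R w)) \<le> lam * ((v + t *\<^sub>R w) \<bullet> (v + t *\<^sub>R w))"
      by (rule le)
    have h2: "(v + t *\<^sub>R w) \<bullet> (A *v (v + t *\<^sub>R w)) = lam + 2*t*(w \<bullet> (A *v v)) + t^2 * (w \<bullet> (A *v w))"
      using sym_inner[OF sym, of v w]
      by (simp add: matrix_vector_right_distrib matrix_vector_mult_scaleR inner_add_left inner_add_right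
          lam_def power2_eq_square algebra_simps inner_commute)
    have h3: "(v + t *\<^sub>R w) \<bullet> (v + t *\<^sub>R w) = 1 + 2*t*(w \<bullet> v) + t^2 * (w \<bullet> w)"
      using vv by (simp add: inner_add_left inner_add_right power2_eq_square algebra_simps inner_commute)
    have h4: "w \<bullet> (A *v v) = w \<bullet> w + lam * (w \<bullet> v)"
      unfolding w_def by (simp add: inner_diff_right inner_diff_left algebra_simps)
    have h5: "lam + 2*t*(w \<bullet> (A *v v)) + t^2 * (w \<bullet> (A *v w)) \<le> lam * (1 + 2*t*(w \<bullet> v) + t^2 * (w \<bullet> w))"
      using h1 h2 h3 by simp
    have h6: "lam * (1 + 2*t*(w \<bullet> v) + t^2 * (w \<bullet> w)) = lam + 2*t*(lam*(w \<bullet> v)) + t^2*(lam * (w \<bullet> w))"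
      by (simp add: algebra_simps)
    have h7: "2*t*(w \<bullet> (A *v v)) = 2*t*(w \<bullet> w) + 2*t*(lam*(w \<bullet> v))"
      by (simp add: h4 algebra_simps)
    have h8: "t^2 * (w \<bullet> (A *v w) - lam * (w \<bullet> w)) = t^2 * (w \<bullet> (A *v w)) - t^2*(lam * (w \<bullet> w))"
      by (simp add: algebra_simps)
    show ?thesis using h5 h6 h7 h8 by linarith
  qed
  then have "w \<bullet> w = 0" by (rule quad_zero)
  then have "A *v v = lam *\<^sub>R v" unfolding w_def by simp
  then show ?thesis using nv vV unfolding V_def by blast
qed

definition onb :: "(real^'n) set \<Rightarrow> bool" where
  "onb B \<longleftrightarrow> finite B \<and> pairwise orthogonal B \<and> (\<forall>b\<in>B. norm b = 1) \<and> span B = UNIV"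

lemma spectral_aux:
  fixes A :: "real^'n^'n"
  assumes sym: "sym_mat A"
  shows "k \<le> CARD('n) \<Longrightarrow> \<exists>B. finite B \<and> card B = k \<and> pairwise orthogonal B \<and> (\<forall>b\<in>B. norm b = 1)
           \<and> (\<forall>b\<in>B. \<exists>\<mu>. A *v b = \<mu> *\<^sub>R b)"
proof (induction k)
  case 0
  then show ?case by (intro exI[of _ "{}"]) auto
next
  case (Suc k)
  then obtain B where B: "finite B" "card B = k" "pairwise orthogonal B" "\<forall>b\<in>B. norm b = 1"
    "\<forall>b\<in>B. \<exists>\<mu>. A *v b = \<mu> *\<^sub>R b" by auto
  then obtain v where v: "norm v = 1" "\<forall>b\<in>B. v \<bullet> b = 0" "\<exists>\<mu>. A *v v = \<mu> *\<^sub>R v"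
    using eig_step[OF sym, of B] Suc.prems by auto
  have vB: "v \<notin> B" using v by (metis inner_eq_zero_iff norm_zero zero_neq_one)
  have "pairwise orthogonal (insert v B)"
    using B(3) v(2) by (auto simp: pairwise_insert orthogonal_def inner_commute)
  then show ?case using B v vB by (intro exI[of _ "insert v B"]) auto
qed

lemma spectral:
  fixes A :: "real^'n^'n"
  assumes sym: "sym_mat A"
  obtains B mu where "onb B" "\<And>b. b \<in> B \<Longrightarrow> A *v b = mu b *\<^sub>R b"
proof -
  obtain B where B: "finite B" "card B = CARD('n)" "pairwise orthogonal B" "\<forall>b\<in>B. norm b = 1"
     "\<forall>b\<in>B. \<exists>\<mu>. A *v b = \<mu> *\<^sub>R b" using spectral_aux[OF sym, of "CARD('n)"] by auto
  have "0 \<notin> B" using B(4) by fastforce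
  then have ind: "independent B" using B(3) pairwise_orthogonal_independent by blast
  have "UNIV \<subseteq> span B" by (rule card_ge_dim_independent) (use ind B in auto)
  then have "onb B" unfolding onb_def using B by auto
  moreover have "\<forall>b\<in>B. A *v b = (SOME \<mu>. A *v b = \<mu> *\<^sub>R b) *\<^sub>R b"
    using B(5) by (metis (mono_tags, lifting) someI_ex)
  ultimately show ?thesis by (intro that[of B "\<lambda>b. SOME \<mu>. A *v b = \<mu> *\<^sub>R b"]) auto
qed

lemma onb_facts:
  assumes "onb B"
  shows "finite B" "\<And>b. b \<in> B \<Longrightarrow> b \<bullet> b = 1" "\<And>b c. b \<in> B \<Longrightarrow> c \<in> B \<Longrightarrow> b \<noteq> c \<Longrightarrow> b \<bullet> c = 0"
    "span B = UNIV"
  using assms unfolding onb_def pairwise_def orthogonal_def by (auto simp: norm_eq_1)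

lemma onb_sum_coeff:
  assumes "onb B" "c \<in> B"
  shows "(\<Sum>b\<in>B. f b * (b \<bullet> c)) = f c"
proof -
  have "(\<Sum>b\<in>B. f b * (b \<bullet> c)) = (\<Sum>b\<in>B. if b = c then f c else 0)"
    using onb_facts[OF assms(1)] assms(2) by (intro sum.cong) auto
  also have "\<dots> = f c" using assms(2) onb_facts(1)[OF assms(1)] by simp
  finally show ?thesis .
qed

lemma onb_expand:
  assumes "onb B"
  shows "x = (\<Sum>b\<in>B. (x \<bullet> b) *\<^sub>R b)"
proof -
  define y where "y = x - (\<Sum>b\<in>B. (x \<bullet> b) *\<^sub>R b)"
  have "y \<bullet> c = 0" if "c \<in> B" for c
  proof -
    have "(\<Sum>b\<in>B. (x \<bullet> b) *\<^sub>R b) \<bullet> c = (\<Sum>b\<in>B. (x \<bullet> b) * (b \<bullet> c))"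
      by (simp add: inner_sum_left)
    also have "\<dots> = x \<bullet> c" by (rule onb_sum_coeff[OF assms that])
    finally show ?thesis unfolding y_def by (simp add: inner_diff_left)
  qed
  then have "orthogonal y z" if "z \<in> span B" for z
    using orthogonal_to_span[OF that] by (simp add: orthogonal_def inner_commute)
  then have "orthogonal y y" using onb_facts(4)[OF assms] by auto
  then have "y = 0" by (simp add: orthogonal_def)
  then show ?thesis unfolding y_def by simp
qed

lemma onb_inner:
  assumes "onb B"
  shows "x \<bullet> y = (\<Sum>b\<in>B. (x \<bullet> b) * (y \<bullet> b))"
proof -
  have "x \<bullet> y = (\<Sum>b\<in>B. (x \<bullet> b) *\<^sub>R b) \<bullet> y" using onb_expand[OF assms, of x] by simp
  also have "\<dots> = (\<Sum>b\<in>B. (x \<bullet> b) * (b \<bullet> y))" by (simp add: inner_sum_left)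
  also have "\<dots> = (\<Sum>b\<in>B. (x \<bullet> b) * (y \<bullet> b))" by (simp add: inner_commute)
  finally show ?thesis .
qed

lemma onb_nonzero:
  assumes "onb B" "x \<noteq> 0" shows "\<exists>b\<in>B. x \<bullet> b \<noteq> 0"
  using onb_inner[OF assms(1), of x x] assms(2) by (metis (no_types, lifting) inner_eq_zero_iff mult_zero_left sum.neutral)

lemma eig_quad:
  assumes "sym_mat A" "onb B" "\<And>b. b \<in> B \<Longrightarrow> A *v b = mu b *\<^sub>R b"
  shows "x \<bullet> (A *v y) = (\<Sum>b\<in>B. mu b * (x \<bullet> b) * (y \<bullet> b))"
proof -
  have "(A *v y) \<bullet> b = mu b * (y \<bullet> b)" if "b \<in> B" for b
    using sym_inner[OF assms(1), of b y] assms(3)[OF that] by (simp add: inner_commute)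
  then show ?thesis using onb_inner[OF assms(2), of x "A *v y"] by (simp add: mult_ac)
qed

lemma eig_normsq:
  assumes "sym_mat A" "onb B" "\<And>b. b \<in> B \<Longrightarrow> A *v b = mu b *\<^sub>R b"
  shows "(A *v x) \<bullet> (A *v x) = (\<Sum>b\<in>B. (mu b)^2 * (x \<bullet> b)^2)"
proof -
  have "(A *v x) \<bullet> b = mu b * (x \<bullet> b)" if "b \<in> B" for b
    using sym_inner[OF assms(1), of b x] assms(3)[OF that] by (simp add: inner_commute)
  then show ?thesis using onb_inner[OF assms(2), of "A *v x" "A *v x"] by (simp add: power2_eq_square mult_ac)
qed

lemma eig_eigenvalues:
  assumes "sym_mat A" "onb B" "\<And>b. b \<in> B \<Longrightarrow> A *v b = mu b *\<^sub>R b"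
  shows "eigenvalues A = mu ` B"
proof
  show "eigenvalues A \<subseteq> mu ` B"
  proof
    fix l assume "l \<in> eigenvalues A"
    then obtain v where v: "v \<noteq> 0" "A *v v = l *\<^sub>R v" unfolding eigenvalues_def by auto
    obtain b where b: "b \<in> B" "v \<bullet> b \<noteq> 0" using onb_nonzero[OF assms(2) v(1)] by auto
    have "(A *v v) \<bullet> b = v \<bullet> (A *v b)" using sym_inner[OF assms(1), of v b] by (simp add: inner_commute)
    then have "l * (v \<bullet> b) = mu b * (v \<bullet> b)" using v(2) assms(3)[OF b(1)] by simp
    then have "l = mu b" using b(2) by simp
    then show "l \<in> mu ` B" using b(1) by blast
  qed
next
  show "mu ` B \<subseteq> eigenvalues A"
  proof
    fix l assume "l \<in> mu ` B"
    then obtain b where "b \<in> B" "l = mu b" by blast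
    moreover then have "b \<noteq> 0" using onb_facts(2)[OF assms(2)] by force
    ultimately show "l \<in> eigenvalues A" unfolding eigenvalues_def using assms(3) by blast
  qed
qed

lemma onb_nonempty: "onb (B::(real^'n) set) \<Longrightarrow> B \<noteq> {}"
proof
  assume "onb B" "B = {}"
  then have "UNIV = {0::real^'n}" unfolding onb_def by simp
  moreover have "axis undefined (1::real) \<noteq> (0::real^'n)" by (simp add: vec_eq_iff axis_def)
  ultimately show False by blast
qed

lemma lmax_ub_gen:
  assumes "sym_mat A" "onb B" "\<And>b. b \<in> B \<Longrightarrow> A *v b = mu b *\<^sub>R b" "b \<in> B"
  shows "mu b \<le> lambda_max A" "lambda_min A \<le> mu b"
proof -
  have e: "eigenvalues A = mu ` B" by (rule eig_eigenvalues[OF assms(1-3)])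
  have f: "finite (mu ` B)" using onb_facts(1)[OF assms(2)] by simp
  show "mu b \<le> lambda_max A" unfolding lambda_max_def e using f assms(4) by simp
  show "lambda_min A \<le> mu b" unfolding lambda_min_def e using f assms(4) by simp
qed

lemma lmax_in:
  assumes "sym_mat A" "onb B" "\<And>b. b \<in> B \<Longrightarrow> A *v b = mu b *\<^sub>R b"
  shows "lambda_max A \<in> mu ` B" "lambda_min A \<in> mu ` B"
proof -
  have e: "eigenvalues A = mu ` B" by (rule eig_eigenvalues[OF assms(1-3)])
  have f: "finite (mu ` B)" using onb_facts(1)[OF assms(2)] by simp
  have ne: "mu ` B \<noteq> {}" using onb_nonempty[OF assms(2)] by simp
  show "lambda_max A \<in> mu ` B" unfolding lambda_max_def e using f ne by (rule Max_in)
  show "lambda_min A \<in> mu ` B" unfolding lambda_min_def e using f ne by (rule Min_in)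
qed

lemma rayleigh:
  fixes A :: "real^'n^'n"
  assumes "sym_mat A"
  shows "x \<bullet> (A *v x) \<le> lambda_max A * (x \<bullet> x)" "lambda_min A * (x \<bullet> x) \<le> x \<bullet> (A *v x)"
proof -
  obtain B mu where B: "onb B" "\<And>b. b \<in> B \<Longrightarrow> A *v b = mu b *\<^sub>R b" using spectral[OF assms] by blast
  have q: "x \<bullet> (A *v x) = (\<Sum>b\<in>B. mu b * (x \<bullet> b) * (x \<bullet> b))" by (rule eig_quad[OF assms B])
  have n: "x \<bullet> x = (\<Sum>b\<in>B. (x \<bullet> b) * (x \<bullet> b))" by (rule onb_inner[OF B(1)])
  have "(\<Sum>b\<in>B. mu b * (x \<bullet> b) * (x \<bullet> b)) \<le> (\<Sum>b\<in>B. lambda_max A * ((x \<bullet> b) * (x \<bullet> b)))"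
    using lmax_ub_gen(1)[OF assms B] by (intro sum_mono) (simp add: mult.assoc mult_right_mono)
  then show "x \<bullet> (A *v x) \<le> lambda_max A * (x \<bullet> x)" using q n by (simp add: sum_distrib_left)
  have "(\<Sum>b\<in>B. lambda_min A * ((x \<bullet> b) * (x \<bullet> b))) \<le> (\<Sum>b\<in>B. mu b * (x \<bullet> b) * (x \<bullet> b))"
    using lmax_ub_gen(2)[OF assms B] by (intro sum_mono) (simp add: mult.assoc mult_right_mono)
  then show "lambda_min A * (x \<bullet> x) \<le> x \<bullet> (A *v x)" using q n by (simp add: sum_distrib_left)
qed

lemma lmax_le:
  fixes A :: "real^'n^'n"
  assumes "sym_mat A" "\<And>x. x \<bullet> (A *v x) \<le> c * (x \<bullet> x)"
  shows "lambda_max A \<le> c"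
proof -
  obtain B mu where B: "onb B" "\<And>b. b \<in> B \<Longrightarrow> A *v b = mu b *\<^sub>R b" using spectral[OF assms(1)] by blast
  obtain b where b: "b \<in> B" "lambda_max A = mu b" using lmax_in(1)[OF assms(1) B] by auto
  have "b \<bullet> (A *v b) = mu b" using B(2)[OF b(1)] onb_facts(2)[OF B(1) b(1)] by simp
  then show ?thesis using assms(2)[of b] b onb_facts(2)[OF B(1) b(1)] by simp
qed

lemma psd_normsq:
  fixes A :: "real^'n^'n"
  assumes "sym_mat A" "\<And>x. x \<bullet> (A *v x) \<ge> 0"
  shows "(A *v x) \<bullet> (A *v x) \<le> lambda_max A * (x \<bullet> (A *v x))"
    "lambda_min A * (x \<bullet> (A *v x)) \<le> (A *v x) \<bullet> (A *v x)"
proof -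
  obtain B mu where B: "onb B" "\<And>b. b \<in> B \<Longrightarrow> A *v b = mu b *\<^sub>R b" using spectral[OF assms(1)] by blast
  have mu0: "mu b \<ge> 0" if "b \<in> B" for b
    using assms(2)[of b] B(2)[OF that] onb_facts(2)[OF B(1) that] by simp
  have q: "x \<bullet> (A *v x) = (\<Sum>b\<in>B. mu b * (x \<bullet> b) * (x \<bullet> b))" by (rule eig_quad[OF assms(1) B])
  have n: "(A *v x) \<bullet> (A *v x) = (\<Sum>b\<in>B. (mu b)^2 * (x \<bullet> b)^2)" by (rule eig_normsq[OF assms(1) B])
  have "(\<Sum>b\<in>B. (mu b)^2 * (x \<bullet> b)^2) \<le> (\<Sum>b\<in>B. lambda_max A * (mu b * (x \<bullet> b) * (x \<bullet> b)))"
  proof (intro sum_mono)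
    fix b assume b: "b \<in> B"
    have "mu b * mu b \<le> lambda_max A * mu b" using lmax_ub_gen(1)[OF assms(1) B b] mu0[OF b]
      by (simp add: mult_right_mono)
    then have "(mu b * mu b) * ((x \<bullet> b) * (x \<bullet> b)) \<le> (lambda_max A * mu b) * ((x \<bullet> b) * (x \<bullet> b))"
      by (rule mult_right_mono) simp
    then show "(mu b)^2 * (x \<bullet> b)^2 \<le> lambda_max A * (mu b * (x \<bullet> b) * (x \<bullet> b))"
      by (simp add: power2_eq_square mult_ac)
  qed
  then show "(A *v x) \<bullet> (A *v x) \<le> lambda_max A * (x \<bullet> (A *v x))" using q n by (simp add: sum_distrib_left)
  have "(\<Sum>b\<in>B. lambda_min A * (mu b * (x \<bullet> b) * (x \<bullet> b))) \<le> (\<Sum>b\<in>B. (mu b)^2 * (x \<bullet> b)^2)"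
  proof (intro sum_mono)
    fix b assume b: "b \<in> B"
    have "lambda_min A * mu b \<le> mu b * mu b" using lmax_ub_gen(2)[OF assms(1) B b] mu0[OF b]
      by (simp add: mult_right_mono)
    then have "(lambda_min A * mu b) * ((x \<bullet> b) * (x \<bullet> b)) \<le> (mu b * mu b) * ((x \<bullet> b) * (x \<bullet> b))"
      by (rule mult_right_mono) simp
    then show "lambda_min A * (mu b * (x \<bullet> b) * (x \<bullet> b)) \<le> (mu b)^2 * (x \<bullet> b)^2"
      by (simp add: power2_eq_square mult_ac)
  qed
  then show "lambda_min A * (x \<bullet> (A *v x)) \<le> (A *v x) \<bullet> (A *v x)" using q n by (simp add: sum_distrib_left)
qed

lemma posdef_lmin:
  fixes A :: "real^'n^'n"
  assumes "posdef A"
  shows "lambda_min A > 0"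
proof -
  have sym: "sym_mat A" using assms posdef_def by blast
  obtain B mu where B: "onb B" "\<And>b. b \<in> B \<Longrightarrow> A *v b = mu b *\<^sub>R b" using spectral[OF sym] by blast
  obtain b where b: "b \<in> B" "lambda_min A = mu b" using lmax_in(2)[OF sym B] by auto
  have "b \<noteq> 0" using onb_facts(2)[OF B(1) b(1)] by force
  then have "b \<bullet> (A *v b) > 0" using assms posdef_def by blast
  then show ?thesis using B(2)[OF b(1)] onb_facts(2)[OF B(1) b(1)] b(2) by simp
qed

lemma posdef_psd: "posdef (A::real^'n^'n) \<Longrightarrow> x \<bullet> (A *v x) \<ge> 0"
  unfolding posdef_def by (cases "x = 0") (auto intro: less_imp_le)

lemma posdef_inj: assumes "posdef (A::real^'n^'n)" shows "inj ((*v) A)"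
proof (rule injI)
  fix x y assume "A *v x = A *v y"
  then have "A *v (x - y) = 0" by (simp add: matrix_vector_mult_diff_distrib)
  then have "(x - y) \<bullet> (A *v (x - y)) = 0" by simp
  then show "x = y" using assms unfolding posdef_def by (metis less_irrefl right_minus_eq)
qed

lemma posdef_invertible: "posdef (A::real^'n^'n) \<Longrightarrow> invertible A"
  by (rule inj_invertible) (rule posdef_inj)

lemma posdef_inv_bound:
  fixes A :: "real^'n^'n"
  assumes "posdef A"
  shows "y \<bullet> (matrix_inv A *v y) \<le> (1 / lambda_min A) * (y \<bullet> y)"
proof -
  have sym: "sym_mat A" using assms posdef_def by blast
  have inv: "invertible A" by (rule posdef_invertible[OF assms])
  define z where "z = matrix_inv A *v y"
  have y: "y = A *v z" unfolding z_def by (simp add: matrix_vector_mul_assoc minv[OF inv])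
  have psd: "\<And>x. x \<bullet> (A *v x) \<ge> 0" using assms by (rule posdef_psd)
  have l: "lambda_min A > 0" by (rule posdef_lmin[OF assms])
  have "lambda_min A * (z \<bullet> (A *v z)) \<le> (A *v z) \<bullet> (A *v z)" by (rule psd_normsq(2)[OF sym psd])
  then have "z \<bullet> (A *v z) \<le> (1 / lambda_min A) * ((A *v z) \<bullet> (A *v z))" using l
    by (simp add: field_simps)
  moreover have "z \<bullet> (A *v z) = y \<bullet> (matrix_inv A *v y)" unfolding z_def
    by (simp add: matrix_vector_mul_assoc minv[OF inv] inner_commute)
  moreover have "(A *v z) \<bullet> (A *v z) = y \<bullet> y" using y by simp
  ultimately show ?thesis by simp
qed

definition fc :: "(real^'n) set \<Rightarrow> (real^'n \<Rightarrow> real) \<Rightarrow> (real \<Rightarrow> real) \<Rightarrow> real^'n^'n" where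
  "fc B mu \<phi> = matrix (\<lambda>x. \<Sum>b\<in>B. (\<phi> (mu b) * (x \<bullet> b)) *\<^sub>R b)"

lemma fc_linear: "linear (\<lambda>x. \<Sum>b\<in>B. (\<phi> (mu b) * (x \<bullet> b)) *\<^sub>R (b::real^'n))"
proof (rule linearI)
  fix x y :: "real^'n" and c :: real
  show "(\<Sum>b\<in>B. (\<phi> (mu b) * ((x + y) \<bullet> b)) *\<^sub>R b) = (\<Sum>b\<in>B. (\<phi> (mu b) * (x \<bullet> b)) *\<^sub>R b) + (\<Sum>b\<in>B. (\<phi> (mu b) * (y \<bullet> b)) *\<^sub>R b)"
    by (simp add: inner_add_left distrib_left scaleR_add_left sum.distrib)
  show "(\<Sum>b\<in>B. (\<phi> (mu b) * ((c *\<^sub>R x) \<bullet> b)) *\<^sub>R b) = c *\<^sub>R (\<Sum>b\<in>B. (\<phi> (mu b) * (x \<bullet> b)) *\<^sub>R b)"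
    by (simp add: scaleR_sum_right mult.left_commute)
qed

lemma fc_apply: "fc B mu \<phi> *v x = (\<Sum>b\<in>B. (\<phi> (mu b) * (x \<bullet> b)) *\<^sub>R b)"
  using fun_cong[OF matrix_vector_mul(2)[OF fc_linear[where B=B and \<phi>=\<phi> and mu=mu]], of x] unfolding fc_def by simp

lemma fc_basis: assumes "onb B" "c \<in> B" shows "fc B mu \<phi> *v c = \<phi> (mu c) *\<^sub>R c"
proof -
  have "fc B mu \<phi> *v c = (\<Sum>b\<in>B. if b = c then \<phi> (mu c) *\<^sub>R c else 0)"
    unfolding fc_apply using onb_facts[OF assms(1)] assms(2) by (intro sum.cong) (auto simp: inner_commute)
  also have "\<dots> = \<phi> (mu c) *\<^sub>R c" using assms(2) onb_facts(1)[OF assms(1)] by simp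
  finally show ?thesis .
qed

lemma fc_inner: "x \<bullet> (fc B mu \<phi> *v y) = (\<Sum>b\<in>B. \<phi> (mu b) * (y \<bullet> b) * (x \<bullet> b))"
  unfolding fc_apply by (simp add: inner_sum_right)

lemma fc_sym: "sym_mat (fc (B::(real^'n) set) mu \<phi>)"
proof (rule sym_from_inner)
  fix x y :: "real^'n"
  have "(fc B mu \<phi> *v x) \<bullet> y = y \<bullet> (fc B mu \<phi> *v x)" by (rule inner_commute)
  also have "\<dots> = (\<Sum>b\<in>B. \<phi> (mu b) * (x \<bullet> b) * (y \<bullet> b))" by (rule fc_inner)
  also have "\<dots> = (\<Sum>b\<in>B. \<phi> (mu b) * (y \<bullet> b) * (x \<bullet> b))" by (simp add: mult.commute mult.left_commute)
  also have "\<dots> = x \<bullet> (fc B mu \<phi> *v y)" by (rule fc_inner[symmetric])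
  finally show "x \<bullet> (fc B mu \<phi> *v y) = (fc B mu \<phi> *v x) \<bullet> y" by simp
qed

lemma mat_eq_span:
  fixes M N :: "real^'n^'m"
  assumes "span C = UNIV" "\<And>b. b \<in> C \<Longrightarrow> M *v b = N *v b"
  shows "M = N"
proof -
  have "M *v x = N *v x" for x
    using linear_eq_on_span[OF matrix_vector_mul_linear matrix_vector_mul_linear, of C] assms by auto
  then show ?thesis by (simp add: matrix_eq)
qed

lemma mat_eq_onb:
  fixes M N :: "real^'n^'n"
  assumes "onb B" "\<And>b. b \<in> B \<Longrightarrow> M *v b = N *v b"
  shows "M = N"
  using mat_eq_span[OF onb_facts(4)[OF assms(1)]] assms(2) by blast

lemma sqrt_eigvec:
  fixes R :: "real^'n^'n"
  assumes R: "posdef R" and e: "R *v (R *v v) = (c^2) *\<^sub>R v" and c: "c \<ge> 0"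
  shows "R *v v = c *\<^sub>R v"
proof -
  define w where "w = R *v v - c *\<^sub>R v"
  have "R *v w + c *\<^sub>R w = R *v (R *v v) - (c^2) *\<^sub>R v"
    unfolding w_def by (simp add: matrix_vector_mult_diff_distrib matrix_vector_mult_scaleR algebra_simps power2_eq_square)
  then have Rw: "R *v w = - (c *\<^sub>R w)" using e by (simp add: eq_neg_iff_add_eq_0)
  show ?thesis
  proof (rule ccontr)
    assume "R *v v \<noteq> c *\<^sub>R v"
    then have "w \<noteq> 0" unfolding w_def by simp
    then have "w \<bullet> (R *v w) > 0" using R posdef_def by blast
    moreover have "w \<bullet> (R *v w) = - c * (w \<bullet> w)" using Rw by simp
    moreover have "c * (w \<bullet> w) \<ge> 0" using c by simp
    ultimately show False by linarith
  qed
qed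

lemma msqrt_props:
  fixes G :: "real^'n^'n"
  assumes G: "posdef G"
  shows "posdef (msqrt G)" "msqrt G ** msqrt G = G"
    "\<And>v g. G *v v = g *\<^sub>R v \<Longrightarrow> g \<ge> 0 \<Longrightarrow> msqrt G *v v = sqrt g *\<^sub>R v"
proof -
  have sym: "sym_mat G" using G posdef_def by blast
  obtain B mu where B: "onb B" "\<And>b. b \<in> B \<Longrightarrow> G *v b = mu b *\<^sub>R b" using spectral[OF sym] by blast
  have mupos: "mu b > 0" if "b \<in> B" for b
  proof -
    have "b \<noteq> 0" using onb_facts(2)[OF B(1) that] by force
    then have "b \<bullet> (G *v b) > 0" using G posdef_def by blast
    then show ?thesis using B(2)[OF that] onb_facts(2)[OF B(1) that] by simp
  qed
  define S where "S = fc B mu sqrt"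
  have Sb: "S *v b = sqrt (mu b) *\<^sub>R b" if "b \<in> B" for b unfolding S_def by (rule fc_basis[OF B(1) that])
  have Spd: "posdef S"
    unfolding posdef_def
  proof (intro conjI allI impI)
    show "sym_mat S" unfolding S_def by (rule fc_sym)
    fix x :: "real^'n" assume "x \<noteq> 0"
    then obtain c where c: "c \<in> B" "x \<bullet> c \<noteq> 0" using onb_nonzero[OF B(1)] by blast
    have "x \<bullet> (S *v x) = (\<Sum>b\<in>B. sqrt (mu b) * (x \<bullet> b) * (x \<bullet> b))" unfolding S_def by (rule fc_inner)
    also have "\<dots> > 0"
    proof (rule sum_pos2[OF onb_facts(1)[OF B(1)] c(1)])
      have "(x \<bullet> c) * (x \<bullet> c) > 0" using c(2) not_real_square_gt_zero by blast
      then show "0 < sqrt (mu c) * (x \<bullet> c) * (x \<bullet> c)" using mupos[OF c(1)]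
        by (simp add: mult.assoc)
      show "\<And>b. b \<in> B \<Longrightarrow> 0 \<le> sqrt (mu b) * (x \<bullet> b) * (x \<bullet> b)"
        using mupos by (simp add: mult.assoc less_imp_le)
    qed
    finally show "x \<bullet> (S *v x) > 0" .
  qed
  have SS: "S ** S = G"
  proof (rule mat_eq_onb[OF B(1)])
    fix b assume b: "b \<in> B"
    have "(S ** S) *v b = S *v (sqrt (mu b) *\<^sub>R b)" by (simp add: matrix_vector_mul_assoc[symmetric] Sb[OF b])
    also have "\<dots> = mu b *\<^sub>R b" using mupos[OF b] by (simp add: matrix_vector_mult_scaleR Sb[OF b])
    finally show "(S ** S) *v b = G *v b" using B(2)[OF b] by simp
  qed
  have uniq: "R = S" if R: "posdef R \<and> R ** R = G" for R
  proof (rule mat_eq_onb[OF B(1)])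
    fix b assume b: "b \<in> B"
    have RR: "R ** R = G" using R by blast
    have "R *v (R *v b) = G *v b" by (simp only: matrix_vector_mul_assoc RR)
    also have "\<dots> = (sqrt (mu b))^2 *\<^sub>R b" using B(2)[OF b] order_less_imp_le[OF mupos[OF b]] by simp
    finally have "R *v (R *v b) = (sqrt (mu b))^2 *\<^sub>R b" .
    moreover have "0 \<le> sqrt (mu b)" using mupos[OF b] by simp
    ultimately have "R *v b = sqrt (mu b) *\<^sub>R b" using R sqrt_eigvec by blast
    then show "R *v b = S *v b" using Sb[OF b] by simp
  qed
  have mS: "msqrt G = S" unfolding msqrt_def
  proof (rule the_equality)
    show "posdef S \<and> S ** S = G" using Spd SS by blast
    fix R assume "posdef R \<and> R ** R = G"
    then show "R = S" by (rule uniq)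
  qed
  show "posdef (msqrt G)" "msqrt G ** msqrt G = G" using mS Spd SS by auto
  fix v g assume v: "G *v v = g *\<^sub>R v" and g: "g \<ge> 0"
  have "S *v (S *v v) = G *v v" by (simp only: matrix_vector_mul_assoc SS)
  also have "\<dots> = (sqrt g)^2 *\<^sub>R v" using v g by simp
  finally have "S *v (S *v v) = (sqrt g)^2 *\<^sub>R v" .
  moreover have "0 \<le> sqrt g" using g by simp
  ultimately have "S *v v = sqrt g *\<^sub>R v" using Spd sqrt_eigvec by blast
  then show "msqrt G *v v = sqrt g *\<^sub>R v" using mS by simp
qed

definition penrose :: "real^'n^'m \<Rightarrow> real^'m^'n \<Rightarrow> bool" where
  "penrose A X \<longleftrightarrow> A ** X ** A = A \<and> X ** A ** X = X \<and>
                    transpose (A ** X) = A ** X \<and> transpose (X ** A) = X ** A"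

lemma penrose_unique:
  assumes "penrose A X1" "penrose A X2"
  shows "X1 = X2"
proof -
  have a: "A ** X1 ** A = A" "X1 ** A ** X1 = X1" "transpose (A ** X1) = A ** X1" "transpose (X1 ** A) = X1 ** A"
    using assms(1) penrose_def by blast+
  have b: "A ** X2 ** A = A" "X2 ** A ** X2 = X2" "transpose (A ** X2) = A ** X2" "transpose (X2 ** A) = X2 ** A"
    using assms(2) penrose_def by blast+
  have "X1 = X1 ** (A ** X1)" using a(2) by (simp add: matrix_mul_assoc)
  also have "\<dots> = X1 ** transpose (A ** X1)" using a(3) by simp
  also have "\<dots> = X1 ** transpose X1 ** transpose A" by (simp add: matrix_transpose_mul matrix_mul_assoc)
  also have "\<dots> = X1 ** transpose X1 ** transpose (A ** X2 ** A)" using b(1) by simp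
  also have "\<dots> = X1 ** transpose (A ** X1) ** transpose (A ** X2)"
    by (simp add: matrix_transpose_mul matrix_mul_assoc)
  also have "\<dots> = X1 ** (A ** X1) ** (A ** X2)" using a(3) b(3) by simp
  also have "\<dots> = (X1 ** A ** X1) ** A ** X2" by (simp add: matrix_mul_assoc)
  also have "\<dots> = X1 ** A ** X2" using a(2) by simp
  finally have 1: "X1 = X1 ** A ** X2" .
  have "X2 = (X2 ** A) ** X2" using b(2) by simp
  also have "\<dots> = transpose (X2 ** A) ** X2" using b(4) by simp
  also have "\<dots> = transpose A ** transpose X2 ** X2" by (simp add: matrix_transpose_mul)
  also have "\<dots> = transpose (A ** X1 ** A) ** transpose X2 ** X2" using a(1) by simp
  also have "\<dots> = transpose (X1 ** A) ** transpose (X2 ** A) ** X2"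
    by (simp add: matrix_transpose_mul matrix_mul_assoc)
  also have "\<dots> = (X1 ** A) ** (X2 ** A) ** X2" using a(4) b(4) by simp
  also have "\<dots> = X1 ** A ** (X2 ** A ** X2)" by (simp add: matrix_mul_assoc)
  also have "\<dots> = X1 ** A ** X2" using b(2) by simp
  finally have 2: "X2 = X1 ** A ** X2" .
  show ?thesis using 1 2 by simp
qed

lemma penrose_exists:
  fixes A :: "real^'n^'m"
  shows "\<exists>X. penrose A X"
proof -
  define G where "G = transpose A ** A"
  have sym: "sym_mat G" unfolding G_def sym_mat_def by (simp add: matrix_transpose_mul)
  obtain B mu where B: "onb B" "\<And>b. b \<in> B \<Longrightarrow> G *v b = mu b *\<^sub>R b" using spectral[OF sym] by blast
  define Bp where "Bp = fc B mu inverse"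
  have Bpb: "Bp *v b = inverse (mu b) *\<^sub>R b" if "b \<in> B" for b unfolding Bp_def by (rule fc_basis[OF B(1) that])
  have Bpsym: "transpose Bp = Bp" using fc_sym unfolding Bp_def sym_mat_def by blast
  have Gsym: "transpose G = G" using sym sym_mat_def by blast
  have Ab0: "A *v b = 0" if "b \<in> B" "mu b = 0" for b
  proof -
    have "b \<bullet> (G *v b) = b \<bullet> (transpose A *v (A *v b))"
      unfolding G_def by (simp only: matrix_vector_mul_assoc)
    also have "\<dots> = (transpose (transpose A) *v b) \<bullet> (A *v b)" by (rule inner_mv_transpose)
    also have "\<dots> = (A *v b) \<bullet> (A *v b)" by (simp only: transpose_transpose)
    finally have "(A *v b) \<bullet> (A *v b) = b \<bullet> (G *v b)" by simp
    also have "\<dots> = 0" using B(2)[OF that(1)] that(2) by simp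
    finally show ?thesis by simp
  qed
  define X where "X = Bp ** transpose A"
  have XA: "X ** A = Bp ** G" unfolding X_def G_def by (simp add: matrix_mul_assoc)
  have XAb: "(X ** A) *v b = (mu b * inverse (mu b)) *\<^sub>R b" if "b \<in> B" for b
    unfolding XA using that by (simp add: matrix_vector_mul_assoc[symmetric] B(2) matrix_vector_mult_scaleR Bpb)
  have 1: "A ** X ** A = A"
  proof (rule mat_eq_span[OF onb_facts(4)[OF B(1)]])
    fix b assume b: "b \<in> B"
    have "(A ** X ** A) *v b = A *v ((X ** A) *v b)" by (simp add: matrix_vector_mul_assoc matrix_mul_assoc)
    also have "\<dots> = (mu b * inverse (mu b)) *\<^sub>R (A *v b)" by (simp only: XAb[OF b] matrix_vector_mult_scaleR)
    also have "\<dots> = A *v b" using Ab0[OF b] by (cases "mu b = 0") auto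
    finally show "(A ** X ** A) *v b = A *v b" .
  qed
  have PB: "(X ** A) ** Bp = Bp"
  proof (rule mat_eq_onb[OF B(1)])
    fix b assume b: "b \<in> B"
    have "(X ** A ** Bp) *v b = (X ** A) *v (Bp *v b)" by (simp only: matrix_vector_mul_assoc)
    also have "\<dots> = inverse (mu b) *\<^sub>R ((X ** A) *v b)" by (simp only: Bpb[OF b] matrix_vector_mult_scaleR)
    also have "\<dots> = (inverse (mu b) * (mu b * inverse (mu b))) *\<^sub>R b" by (simp add: XAb[OF b])
    also have "\<dots> = Bp *v b" by (cases "mu b = 0") (simp_all add: Bpb[OF b])
    finally show "(X ** A ** Bp) *v b = Bp *v b" .
  qed
  have 2: "X ** A ** X = X" unfolding X_def using PB[unfolded X_def] by (simp add: matrix_mul_assoc)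
  have 3: "transpose (A ** X) = A ** X" unfolding X_def
    by (simp add: matrix_transpose_mul Bpsym matrix_mul_assoc)
  have comm: "G ** Bp = Bp ** G"
  proof (rule mat_eq_onb[OF B(1)])
    fix b assume b: "b \<in> B"
    show "(G ** Bp) *v b = (Bp ** G) *v b"
      using b by (simp add: matrix_vector_mul_assoc[symmetric] Bpb B(2) matrix_vector_mult_scaleR)
  qed
  have 4: "transpose (X ** A) = X ** A" unfolding XA
    by (simp add: matrix_transpose_mul Bpsym Gsym comm)
  show ?thesis using 1 2 3 4 penrose_def by blast
qed

lemma pinv_penrose: "penrose A (pinv A)"
proof -
  obtain X where X: "penrose A X" using penrose_exists by blast
  have "pinv A = X" unfolding pinv_def
  proof (rule the_equality)
    show "A ** X ** A = A \<and> X ** A ** X = X \<and> transpose (A ** X) = A ** X \<and> transpose (X ** A) = X ** A"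
      using X unfolding penrose_def .
    fix Y assume "A ** Y ** A = A \<and> Y ** A ** Y = Y \<and> transpose (A ** Y) = A ** Y \<and> transpose (Y ** A) = Y ** A"
    then have "penrose A Y" unfolding penrose_def .
    then show "Y = X" using X penrose_unique by blast
  qed
  then show ?thesis using X by simp
qed

lemma sum_mv: "(\<Sum>a\<in>A. F a) *v (y::real^'n) = (\<Sum>a\<in>A. (F a :: real^'n^'m) *v y)"
  by (induct A rule: infinite_finite_induct) (simp_all add: matrix_vector_mult_add_rdistrib)

lemma ES_mv: "ES k (F :: 'm::finite set \<Rightarrow> real^'n^'p) *v y = ES k (\<lambda>S. F S *v y)"
  unfolding ES_def scaleR_matrix_vector_assoc[symmetric] sum_mv ..

lemma ES_inner: "(x::real^'n) \<bullet> ES k (f :: 'm::finite set \<Rightarrow> real^'n) = ES k (\<lambda>S. x \<bullet> f S)"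
  unfolding ES_def by (simp add: inner_sum_right)

lemma ES_real: "ES k (f :: 'm::finite set \<Rightarrow> real) = (\<Sum>S\<in>batches k. f S) / real (card (batches k :: 'm set set))"
  unfolding ES_def by simp

lemma ES_mono: "(\<And>S. S \<in> batches k \<Longrightarrow> f S \<le> g S) \<Longrightarrow> ES k (f :: 'm::finite set \<Rightarrow> real) \<le> ES k g"
  unfolding ES_real by (intro divide_right_mono sum_mono) auto

lemma ES_const: assumes "batches k \<noteq> ({} :: 'm::finite set set)"
  shows "ES k (\<lambda>S::'m set. c :: real) = c"
proof -
  have "finite (batches k :: 'm set set)" by simp
  then have "card (batches k :: 'm set set) > 0" using assms by (simp add: card_gt_0_iff)
  then show ?thesis unfolding ES_real using assms by simp
qed

lemma ES_add: "ES k (\<lambda>S. f S + g S) = ES k f + ES k (g :: 'm::finite set \<Rightarrow> real)"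
  unfolding ES_real by (simp add: sum.distrib add_divide_distrib)

lemma ES_diff: "ES k (\<lambda>S. f S - g S) = ES k f - ES k (g :: 'm::finite set \<Rightarrow> real)"
  unfolding ES_real by (simp add: sum_subtractf diff_divide_distrib)

lemma ES_cmult: "ES k (\<lambda>S. c * f S) = c * ES k (f :: 'm::finite set \<Rightarrow> real)"
  unfolding ES_real by (simp add: sum_distrib_left)

lemma ES_nonneg: "(\<And>S. S \<in> batches k \<Longrightarrow> f S \<ge> 0) \<Longrightarrow> ES k (f :: 'm::finite set \<Rightarrow> real) \<ge> 0"
  unfolding ES_real by (intro divide_nonneg_nonneg sum_nonneg) auto

lemma sym_mul3: "sym_mat A \<Longrightarrow> sym_mat M \<Longrightarrow> sym_mat (M ** A ** (M::real^'n^'n))"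
  unfolding sym_mat_def by (simp add: matrix_transpose_mul matrix_mul_assoc)

lemma sym_ES: assumes "\<And>S. sym_mat (F S)" shows "sym_mat (ES k F :: real^'n^'n)"
proof (rule sym_from_inner)
  fix x y :: "real^'n"
  have "x \<bullet> (ES k F *v y) = ES k (\<lambda>S. x \<bullet> (F S *v y))" by (simp add: ES_mv ES_inner)
  also have "\<dots> = ES k (\<lambda>S. (F S *v x) \<bullet> y)" using sym_inner[OF assms] by simp
  also have "\<dots> = (ES k F *v x) \<bullet> y" by (simp add: ES_mv ES_inner inner_commute)
  finally show "x \<bullet> (ES k F *v y) = (ES k F *v x) \<bullet> y" .
qed

lemma P_props:
  fixes A :: "real^'n^'m"
  assumes lam: "lam \<ge> 0"
  shows "sym_mat (rpinv lam A ** A)"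
    "((rpinv lam A ** A) *v y) \<bullet> ((rpinv lam A ** A) *v y) \<le> y \<bullet> ((rpinv lam A ** A) *v y)"
proof -
  have "sym_mat (rpinv lam A ** A) \<and> ((rpinv lam A ** A) *v y) \<bullet> ((rpinv lam A ** A) *v y) \<le> y \<bullet> ((rpinv lam A ** A) *v y)"
  proof (cases "lam = 0")
    case True
    define X where "X = pinv A"
    have pen: "A ** X ** A = A" "X ** A ** X = X" "transpose (X ** A) = X ** A"
      using pinv_penrose[of A] unfolding X_def penrose_def by blast+
    have sym: "sym_mat (X ** A)" using pen(3) sym_mat_def by blast
    have idem: "(X ** A) ** (X ** A) = X ** A" using pen(2) by (simp add: matrix_mul_assoc)
    have "((X ** A) *v y) \<bullet> ((X ** A) *v y) = y \<bullet> ((X ** A) *v ((X ** A) *v y))"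
      using sym_inner[OF sym, of y "(X ** A) *v y"] by simp
    also have "\<dots> = y \<bullet> ((X ** A) *v y)" by (simp only: matrix_vector_mul_assoc idem)
    finally show ?thesis using True sym unfolding rpinv_def X_def by simp
  next
    case False
    then have lpos: "lam > 0" using lam by simp
    define G where "G = transpose A ** A"
    define C where "C = G + lam *\<^sub>R mat 1"
    have Gsym: "sym_mat G" unfolding G_def sym_mat_def by (simp add: matrix_transpose_mul)
    have Gq: "x \<bullet> (G *v x) = (A *v x) \<bullet> (A *v x)" for x
    proof -
      have "x \<bullet> (G *v x) = x \<bullet> (transpose A *v (A *v x))" unfolding G_def by (simp only: matrix_vector_mul_assoc)
      also have "\<dots> = (transpose (transpose A) *v x) \<bullet> (A *v x)" by (rule inner_mv_transpose)
      finally show ?thesis by (simp only: transpose_transpose)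
    qed
    have Cv: "C *v x = G *v x + lam *\<^sub>R x" for x
      unfolding C_def by (simp add: matrix_vector_mult_add_rdistrib scaleR_matrix_vector_assoc[symmetric])
    have Cpd: "posdef C"
      unfolding posdef_def
    proof (intro conjI allI impI)
      show "sym_mat C" unfolding sym_mat_def C_def using Gsym
        by (simp add: sym_mat_def transpose_def vec_eq_iff mat_def)
      fix x :: "real^'n" assume "x \<noteq> 0"
      then have "x \<bullet> x > 0" by simp
      then show "x \<bullet> (C *v x) > 0" using lpos by (simp add: Cv inner_add_right Gq add_nonneg_pos)
    qed
    have Cinv: "invertible C" by (rule posdef_invertible[OF Cpd])
    define Ci where "Ci = matrix_inv C"
    have Cisym: "sym_mat Ci" unfolding Ci_def using Cpd Cinv posdef_def sym_minv by blast
    define P where "P = Ci ** transpose A ** A"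
    have P_eq: "rpinv lam A ** A = P" unfolding P_def rpinv_def Ci_def C_def G_def using False by simp
    have Pv: "P *v x = x - lam *\<^sub>R (Ci *v x)" for x
    proof -
      have "P *v x = Ci *v (G *v x)" unfolding P_def G_def by (simp add: matrix_vector_mul_assoc matrix_mul_assoc)
      also have "G *v x = C *v x - lam *\<^sub>R x" by (simp add: Cv)
      also have "Ci *v (C *v x - lam *\<^sub>R x) = x - lam *\<^sub>R (Ci *v x)"
        by (simp add: matrix_vector_mult_diff_distrib matrix_vector_mult_scaleR matrix_vector_mul_assoc
            Ci_def minv[OF Cinv])
      finally show ?thesis .
    qed
    have Psym: "sym_mat P"
    proof (rule sym_from_inner)
      fix x y :: "real^'n"
      show "x \<bullet> (P *v y) = (P *v x) \<bullet> y"
        using sym_inner[OF Cisym, of x y] by (simp add: Pv inner_diff_right inner_diff_left inner_commute)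
    qed
    define z where "z = Ci *v y"
    have yz: "y = C *v z" unfolding z_def Ci_def by (simp add: matrix_vector_mul_assoc minv[OF Cinv])
    have Py: "P *v y = G *v z" using Pv[of y] yz unfolding z_def[symmetric] by (simp add: Cv)
    have "y \<bullet> (P *v y) = (P *v y) \<bullet> (P *v y) + lam * ((A *v z) \<bullet> (A *v z))"
    proof -
      have "y \<bullet> (P *v y) = (G *v z + lam *\<^sub>R z) \<bullet> (G *v z)" using yz Py Cv by simp
      also have "\<dots> = (G *v z) \<bullet> (G *v z) + lam * (z \<bullet> (G *v z))" by (simp add: inner_add_left)
      finally show ?thesis using Py Gq by simp
    qed
    moreover have "lam * ((A *v z) \<bullet> (A *v z)) \<ge> 0" using lam by simp
    ultimately have "(P *v y) \<bullet> (P *v y) \<le> y \<bullet> (P *v y)" by linarith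
    then show ?thesis using Psym P_eq by simp
  qed
  then show "sym_mat (rpinv lam A ** A)"
    "((rpinv lam A ** A) *v y) \<bullet> ((rpinv lam A ** A) *v y) \<le> y \<bullet> ((rpinv lam A ** A) *v y)" by auto
qed

lemma projP_props:
  assumes "lam \<ge> 0"
  shows "sym_mat (projP lam J S)"
    "(projP lam J S *v y) \<bullet> (projP lam J S *v y) \<le> y \<bullet> (projP lam J S *v y)"
  unfolding projP_def JS_rpinv_def using P_props[OF assms] by auto

lemma sym_psd_inv_posdef:
  fixes A :: "real^'n^'n"
  assumes sym: "sym_mat A" and psd: "\<And>x. x \<bullet> (A *v x) \<ge> 0" and inv: "invertible A"
  shows "posdef A"
proof -
  obtain B mu where B: "onb B" "\<And>b. b \<in> B \<Longrightarrow> A *v b = mu b *\<^sub>R b" using spectral[OF sym] by blast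
  have mupos: "mu b > 0" if "b \<in> B" for b
  proof -
    have bb: "b \<bullet> b = 1" using onb_facts(2)[OF B(1) that] .
    have "mu b \<ge> 0" using psd[of b] B(2)[OF that] bb by simp
    moreover have "mu b \<noteq> 0"
    proof
      assume "mu b = 0"
      then have "A *v b = A *v 0" using B(2)[OF that] by simp
      then have "b = 0" using inj_matrix_vector_mult[OF inv] by (meson injD)
      then show False using bb by simp
    qed
    ultimately show ?thesis by simp
  qed
  show ?thesis unfolding posdef_def
  proof (intro conjI allI impI sym)
    fix x :: "real^'n" assume "x \<noteq> 0"
    then obtain c where c: "c \<in> B" "x \<bullet> c \<noteq> 0" using onb_nonzero[OF B(1)] by blast
    have "x \<bullet> (A *v x) = (\<Sum>b\<in>B. mu b * (x \<bullet> b) * (x \<bullet> b))" by (rule eig_quad[OF sym B])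
    also have "\<dots> > 0"
    proof (rule sum_pos2[OF onb_facts(1)[OF B(1)] c(1)])
      have "(x \<bullet> c) * (x \<bullet> c) > 0" using c(2) not_real_square_gt_zero by blast
      then show "0 < mu c * (x \<bullet> c) * (x \<bullet> c)" using mupos[OF c(1)] by (simp add: mult.assoc)
      show "\<And>b. b \<in> B \<Longrightarrow> 0 \<le> mu b * (x \<bullet> b) * (x \<bullet> b)"
        using mupos by (simp add: mult.assoc less_imp_le)
    qed
    finally show "x \<bullet> (A *v x) > 0" .
  qed
qed

lemma posdef_minv:
  fixes A :: "real^'n^'n"
  assumes "posdef A" shows "posdef (matrix_inv A)"
proof -
  have inv: "invertible A" by (rule posdef_invertible[OF assms])
  have sym: "sym_mat A" using assms posdef_def by blast
  show ?thesis unfolding posdef_def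
  proof (intro conjI allI impI)
    show "sym_mat (matrix_inv A)" by (rule sym_minv[OF sym inv])
    fix y :: "real^'n" assume y: "y \<noteq> 0"
    define z where "z = matrix_inv A *v y"
    have yz: "y = A *v z" unfolding z_def by (simp add: matrix_vector_mul_assoc minv[OF inv])
    then have "z \<noteq> 0" using y by auto
    then have "z \<bullet> (A *v z) > 0" using assms posdef_def by blast
    moreover have "y \<bullet> (matrix_inv A *v y) = z \<bullet> (A *v z)"
      unfolding z_def by (simp add: matrix_vector_mul_assoc minv[OF inv] inner_commute)
    ultimately show "y \<bullet> (matrix_inv A *v y) > 0" by simp
  qed
qed

lemma lists_Suc_eq:
  "{Ss. length Ss = Suc t \<and> set Ss \<subseteq> A} = (\<lambda>(S, Ss). S # Ss) ` (A \<times> {Ss. length Ss = t \<and> set Ss \<subseteq> A})"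
  by (auto simp: length_Suc_conv image_iff)

lemma lists_finite: "finite A \<Longrightarrow> finite {Ss. length Ss = t \<and> set Ss \<subseteq> A}"
  using finite_lists_length_eq[of A t] by (simp add: conj_commute)

lemma E_seq_Suc:
  "E_seq k (Suc t) f = ES k (\<lambda>S::'m::finite set. E_seq k t (\<lambda>Ss. f (S # Ss)))"
proof -
  define A where "A = (batches k :: 'm set set)"
  define L where "L = {Ss. length Ss = t \<and> set Ss \<subseteq> A}"
  have finA: "finite A" unfolding A_def by simp
  have finL: "finite L" unfolding L_def using lists_finite[OF finA] .
  have inj: "inj_on (\<lambda>(S, Ss). S # Ss) (A \<times> L)" by (auto simp: inj_on_def)
  have "(\<Sum>Ss\<in>{Ss. length Ss = Suc t \<and> set Ss \<subseteq> A}. f Ss) = (\<Sum>(S, Ss)\<in>A \<times> L. f (S # Ss))"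
    unfolding lists_Suc_eq L_def[symmetric] by (subst sum.reindex[OF inj]) (auto simp: comp_def split: prod.splits intro!: sum.cong)
  also have "\<dots> = (\<Sum>S\<in>A. \<Sum>Ss\<in>L. f (S # Ss))" by (rule sum.cartesian_product[symmetric])
  finally have e: "(\<Sum>Ss\<in>{Ss. length Ss = Suc t \<and> set Ss \<subseteq> A}. f Ss) = (\<Sum>S\<in>A. \<Sum>Ss\<in>L. f (S # Ss))" .
  show ?thesis
    unfolding E_seq_def ES_real A_def[symmetric] L_def[symmetric] e
    by (simp add: sum_divide_distrib divide_divide_eq_left mult.commute)
qed

lemma E_seq_0: "E_seq k 0 f = f []"
proof -
  have "{Ss. length Ss = 0 \<and> set Ss \<subseteq> B} = {[]}" for B :: "'a set set" by auto
  then show ?thesis unfolding E_seq_def by simp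
qed

lemma setup_facts:
  fixes J :: "real^'n::finite^'m::finite" and H :: "real^'m^'m"
  assumes rankJ: "rank J = CARD('n)" and Hpd: "posdef H"
    and cons2: "range ((*v) (H ** J)) \<subseteq> range ((*v) J)"
  defines "G \<equiv> transpose J ** J"
  defines "Sq \<equiv> msqrt G"
  defines "R \<equiv> matrix_inv Sq"
  defines "Ht \<equiv> R ** transpose J ** H ** J ** R"
  defines "M \<equiv> matrix_inv G ** transpose J ** H ** J"
  shows "posdef G" "posdef Sq" "Sq ** Sq = G" "R ** Sq = mat 1" "Sq ** R = mat 1" "sym_mat R"
    "invertible R" "posdef Ht" "J ** M = H ** J" "G ** M = transpose J ** H ** J" "Sq ** M = Ht ** Sq"
    "\<And>e. (Sq *v e) \<bullet> (Ht *v (Sq *v e)) = (J *v e) \<bullet> (H *v (J *v e))"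
proof -
  have Jinj: "inj ((*v) J)" using rankJ full_rank_injective by blast
  have Hsym: "sym_mat H" using Hpd posdef_def by blast
  have Gq: "x \<bullet> (G *v x) = (J *v x) \<bullet> (J *v x)" for x
  proof -
    have "x \<bullet> (G *v x) = x \<bullet> (transpose J *v (J *v x))" unfolding G_def by (simp only: matrix_vector_mul_assoc)
    also have "\<dots> = (transpose (transpose J) *v x) \<bullet> (J *v x)" by (rule inner_mv_transpose)
    finally show ?thesis by (simp only: transpose_transpose)
  qed
  show Gpd: "posdef G" unfolding posdef_def
  proof (intro conjI allI impI)
    show "sym_mat G" unfolding G_def sym_mat_def by (simp add: matrix_transpose_mul)
    fix x :: "real^'n" assume "x \<noteq> 0"
    then have "J *v x \<noteq> 0" using Jinj by (metis injD matrix_vector_mult_0_right)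
    then show "x \<bullet> (G *v x) > 0" using Gq by simp
  qed
  show Sqpd: "posdef Sq" and SqSq: "Sq ** Sq = G" unfolding Sq_def using msqrt_props[OF Gpd] by auto
  have Sqinv: "invertible Sq" by (rule posdef_invertible[OF Sqpd])
  show RSq: "R ** Sq = mat 1" and SqR: "Sq ** R = mat 1" unfolding R_def using minv[OF Sqinv] by auto
  show Rsym: "sym_mat R" unfolding R_def using Sqpd Sqinv posdef_def sym_minv by blast
  show Rinv: "invertible R" unfolding R_def by (rule invertible_minv[OF Sqinv])
  have Rinj: "inj ((*v) R)" by (rule inj_matrix_vector_mult[OF Rinv])
  have HJsym: "sym_mat (transpose J ** H ** J)"
    using Hsym unfolding sym_mat_def by (simp add: matrix_transpose_mul matrix_mul_assoc)
  have Ht_eq: "Ht = R ** (transpose J ** H ** J) ** R" unfolding Ht_def by (simp add: matrix_mul_assoc)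
  show "posdef Ht" unfolding posdef_def
  proof (intro conjI allI impI)
    show "sym_mat Ht" unfolding Ht_eq by (rule sym_mul3[OF HJsym Rsym])
    fix x :: "real^'n" assume "x \<noteq> 0"
    then have "R *v x \<noteq> 0" using Rinj by (metis injD matrix_vector_mult_0_right)
    then have "J *v (R *v x) \<noteq> 0" using Jinj by (metis injD matrix_vector_mult_0_right)
    then have pos: "(J *v (R *v x)) \<bullet> (H *v (J *v (R *v x))) > 0" using Hpd posdef_def by blast
    have "x \<bullet> (Ht *v x) = x \<bullet> (R *v (transpose J *v (H *v (J *v (R *v x)))))"
      unfolding Ht_def by (simp only: matrix_vector_mul_assoc[symmetric])
    also have "\<dots> = (R *v x) \<bullet> (transpose J *v (H *v (J *v (R *v x))))" by (rule sym_inner[OF Rsym])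
    also have "\<dots> = (transpose (transpose J) *v (R *v x)) \<bullet> (H *v (J *v (R *v x)))" by (rule inner_mv_transpose)
    also have "\<dots> = (J *v (R *v x)) \<bullet> (H *v (J *v (R *v x)))" by (simp only: transpose_transpose)
    finally show "x \<bullet> (Ht *v x) > 0" using pos by simp
  qed
  have Ginv: "invertible G" by (rule posdef_invertible[OF Gpd])
  show JM: "J ** M = H ** J"
  proof -
    have "J *v (M *v x) = (H ** J) *v x" for x
    proof -
      obtain y where y: "(H ** J) *v x = J *v y" using cons2 by blast
      have "J *v (M *v x) = J *v (matrix_inv G *v (transpose J *v ((H ** J) *v x)))"
        unfolding M_def by (simp add: matrix_vector_mul_assoc matrix_mul_assoc)
      also have "\<dots> = J *v (matrix_inv G *v (G *v y))" unfolding y G_def by (simp add: matrix_vector_mul_assoc)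
      also have "\<dots> = J *v y" by (simp add: matrix_vector_mul_assoc minv[OF Ginv])
      finally show ?thesis using y by simp
    qed
    then show ?thesis by (simp add: matrix_eq matrix_vector_mul_assoc)
  qed
  show GM: "G ** M = transpose J ** H ** J" unfolding M_def
    by (simp add: matrix_mul_assoc minv[OF Ginv])
  have Ginv_eq: "matrix_inv G = R ** R"
  proof (rule minv_unique)
    have "G ** (R ** R) = Sq ** (Sq ** R) ** R" using SqSq by (simp add: matrix_mul_assoc)
    then show "G ** (R ** R) = mat 1" using SqR by simp
  qed
  show "Sq ** M = Ht ** Sq"
  proof -
    have "Sq ** M = (Sq ** R) ** R ** (transpose J ** H ** J)" unfolding M_def Ginv_eq by (simp add: matrix_mul_assoc)
    also have "\<dots> = R ** (transpose J ** H ** J)" using SqR by simp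
    also have "\<dots> = R ** (transpose J ** H ** J) ** (R ** Sq)" using RSq by simp
    also have "\<dots> = Ht ** Sq" unfolding Ht_def by (simp add: matrix_mul_assoc)
    finally show ?thesis .
  qed
  fix e :: "real^'n"
  have re: "R *v (Sq *v e) = e" by (simp add: matrix_vector_mul_assoc RSq)
  have "(Sq *v e) \<bullet> (Ht *v (Sq *v e)) = (Sq *v e) \<bullet> (R *v (transpose J *v (H *v (J *v e))))"
    unfolding Ht_def by (simp only: matrix_vector_mul_assoc[symmetric] re)
  also have "\<dots> = (R *v (Sq *v e)) \<bullet> (transpose J *v (H *v (J *v e)))"
    by (rule sym_inner[OF Rsym])
  also have "\<dots> = e \<bullet> (transpose J *v (H *v (J *v e)))" by (simp only: re)
  also have "\<dots> = (transpose (transpose J) *v e) \<bullet> (H *v (J *v e))" by (rule inner_mv_transpose)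
  also have "\<dots> = (J *v e) \<bullet> (H *v (J *v e))" by (simp only: transpose_transpose)
  finally show "(Sq *v e) \<bullet> (Ht *v (Sq *v e)) = (J *v e) \<bullet> (H *v (J *v e))" .
qed

lemma batches_ne: "k \<le> CARD('m::finite) \<Longrightarrow> batches k \<noteq> ({} :: 'm set set)"
proof -
  assume "k \<le> CARD('m)"
  then obtain T :: "'m set" where "card T = k" using obtain_subset_with_card_n[of k "UNIV :: 'm set"] by blast
  then show ?thesis unfolding batches_def by blast
qed

lemma pbar_facts:
  fixes J :: "real^'n::finite^'m::finite"
  assumes lam: "lam \<ge> 0"
    and Pbar_ns: "invertible (ES k (projP lam J) :: real^'n^'n)"
    and Pbar_eig: "share_eigenbasis (ES k (projP lam J)) (transpose J ** J)"
    and Gpd: "posdef (transpose J ** J)"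
  defines "Pbar \<equiv> (ES k (projP lam J) :: real^'n^'n)"
  defines "Sq \<equiv> msqrt (transpose J ** J)"
  shows "sym_mat Pbar" "posdef Pbar" "Sq ** Pbar = Pbar ** Sq"
proof -
  show sym: "sym_mat Pbar" unfolding Pbar_def by (rule sym_ES) (rule projP_props(1)[OF lam])
  have psd: "x \<bullet> (Pbar *v x) \<ge> 0" for x
  proof -
    have "x \<bullet> (Pbar *v x) = ES k (\<lambda>S. x \<bullet> (projP lam J S *v x))" unfolding Pbar_def by (simp add: ES_mv ES_inner)
    also have "\<dots> \<ge> 0"
    proof (rule ES_nonneg)
      fix S :: "'m set"
      have "0 \<le> (projP lam J S *v x) \<bullet> (projP lam J S *v x)" by simp
      also have "\<dots> \<le> x \<bullet> (projP lam J S *v x)" by (rule projP_props(2)[OF lam])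
      finally show "0 \<le> x \<bullet> (projP lam J S *v x)" .
    qed
    finally show ?thesis .
  qed
  show "posdef Pbar" using sym_psd_inv_posdef[OF sym psd] Pbar_ns unfolding Pbar_def by blast
  obtain Bs where Bs: "independent Bs" "span Bs = UNIV"
    "\<And>v. v \<in> Bs \<Longrightarrow> (\<exists>\<mu>. Pbar *v v = \<mu> *\<^sub>R v) \<and> (\<exists>\<mu>. (transpose J ** J) *v v = \<mu> *\<^sub>R v)"
    using Pbar_eig unfolding share_eigenbasis_def Pbar_def by blast
  show "Sq ** Pbar = Pbar ** Sq"
  proof (rule mat_eq_span[OF Bs(2)])
    fix v assume v: "v \<in> Bs"
    obtain p g where p: "Pbar *v v = p *\<^sub>R v" and g: "(transpose J ** J) *v v = g *\<^sub>R v" using Bs(3)[OF v] by blast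
    have "v \<noteq> 0" using Bs(1) v dependent_zero by blast
    then have vv: "v \<bullet> v > 0" by simp
    have "v \<bullet> ((transpose J ** J) *v v) \<ge> 0" using Gpd by (rule posdef_psd)
    then have "g * (v \<bullet> v) \<ge> 0" using g by simp
    then have "g \<ge> 0" using mult_neg_pos[of g "v \<bullet> v"] vv by linarith
    then have sv: "Sq *v v = sqrt g *\<^sub>R v" unfolding Sq_def using msqrt_props(3)[OF Gpd g] by blast
    have "(Sq ** Pbar) *v v = (p * sqrt g) *\<^sub>R v"
      by (simp add: matrix_vector_mul_assoc[symmetric] p sv matrix_vector_mult_scaleR)
    also have "\<dots> = (Pbar ** Sq) *v v"
      by (simp add: matrix_vector_mul_assoc[symmetric] p sv matrix_vector_mult_scaleR)
    finally show "(Sq ** Pbar) *v v = (Pbar ** Sq) *v v" .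
  qed
qed

theorem theorem2:
  fixes J :: "real^'n::finite^'m::finite" and H :: "real^'m^'m" and q :: "real^'m"
    and c :: real and lam :: real and k :: nat and thstar :: "real^'n"
  assumes rankJ: "rank J = CARD('n)"
    and Hpd: "posdef H"
    and cons1: "\<forall>v. quadloss H q c (J *v thstar) \<le> quadloss H q c v"
    and cons2: "range ((*v) (H ** J)) \<subseteq> range ((*v) J)"
    and k: "1 \<le> k" "k \<le> CARD('m)"
    and lam: "lam \<ge> 0"
    and Pbar_ns: "invertible (ES k (projP lam J) :: real^'n^'n)"
    and Pbar_eig: "share_eigenbasis (ES k (projP lam J)) (transpose J ** J)"
  shows "let Pbar = ES k (projP lam J) :: real^'n^'n;
             alpha = lambda_min Pbar;
             R = matrix_inv (msqrt (transpose J ** J));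
             Qbar = R ** Pbar ** R;
             Ht = R ** transpose J ** H ** J ** R;
             gamma = 1 / lambda_max (ES k (\<lambda>S. R ** projP lam J S ** matrix_inv Qbar
                                                  ** projP lam J S ** R) :: real^'n^'n);
             eta = gamma / lambda_max Ht
         in gamma \<ge> 1 / kappa Qbar \<and>
            (\<forall>(th0::real^'n) (t::nat).
               E_seq k t (\<lambda>Ss. sqnorm_in (matrix_inv Qbar)
                                  (sngd_iter eta lam J H q Ss th0 - thstar))
               \<le> (1 - (1 / kappa Ht) * alpha * gamma) ^ t
                  * sqnorm_in (matrix_inv Qbar) (th0 - thstar))"
proof -
  define G where "G = transpose J ** J"
  define Sq where "Sq = msqrt G"
  define R where "R = matrix_inv Sq"
  define Ht where "Ht = R ** transpose J ** H ** J ** R"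
  define M where "M = matrix_inv G ** transpose J ** H ** J"
  define Pbar where "Pbar = (ES k (projP lam J) :: real^'n^'n)"
  define P where "P = projP lam J"
  have sf: "posdef G" "posdef Sq" "Sq ** Sq = G" "R ** Sq = mat 1" "Sq ** R = mat 1" "sym_mat R"
    "invertible R" "posdef Ht" "J ** M = H ** J" "G ** M = transpose J ** H ** J" "Sq ** M = Ht ** Sq"
    "\<And>e. (Sq *v e) \<bullet> (Ht *v (Sq *v e)) = (J *v e) \<bullet> (H *v (J *v e))"
    using setup_facts[OF rankJ Hpd cons2] unfolding G_def Sq_def R_def Ht_def M_def by auto
  note Gpd = sf(1) and Sqpd = sf(2) and SqSq = sf(3) and RSq = sf(4) and SqR = sf(5) and Rsym = sf(6)
    and Rinv = sf(7) and Htpd = sf(8) and JM = sf(9) and GM = sf(10) and SqM = sf(11) and Htq = sf(12)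
  have pf: "sym_mat Pbar" "posdef Pbar" "Sq ** Pbar = Pbar ** Sq"
    using pbar_facts[OF lam Pbar_ns Pbar_eig] Gpd unfolding Pbar_def Sq_def G_def by auto
  note Pbar_sym = pf(1) and Pbar_pd = pf(2) and comm = pf(3)
  have bs_ne: "batches k \<noteq> ({} :: 'm set set)" by (rule batches_ne[OF k(2)])
  have Ppos: "card (batches k :: 'm set set) > 0" using bs_ne by (simp add: card_gt_0_iff)
  have Psym: "\<And>S. sym_mat (P S)" unfolding P_def by (rule projP_props(1)[OF lam])
  have Ppsd: "\<And>S y. (P S *v y) \<bullet> (P S *v y) \<le> y \<bullet> (P S *v y)" unfolding P_def by (rule projP_props(2)[OF lam])
  have Pbar_ES: "Pbar *v y = ES k (\<lambda>S. P S *v y)" for y unfolding Pbar_def P_def by (rule ES_mv)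
  have Hsym: "sym_mat H" using Hpd posdef_def by blast
  have Gsym: "sym_mat G" using Gpd posdef_def by blast
  have Sqsym: "sym_mat Sq" using Sqpd posdef_def by blast
  have Htsym: "sym_mat Ht" using Htpd posdef_def by blast
  have Pbar_inv: "invertible Pbar" by (rule posdef_invertible[OF Pbar_pd])
  define Pi where "Pi = matrix_inv Pbar"
  have PPi: "Pbar ** Pi = mat 1" "Pi ** Pbar = mat 1" unfolding Pi_def using minv[OF Pbar_inv] by auto
  define Qbar where "Qbar = R ** Pbar ** R"
  define Qi where "Qi = matrix_inv Qbar"
  have Qi_eq: "Qi = Sq ** Pi ** Sq" unfolding Qi_def Qbar_def
  proof (rule minv_unique)
    have "R ** Pbar ** R ** (Sq ** Pi ** Sq) = R ** Pbar ** (R ** Sq) ** Pi ** Sq" by (simp add: matrix_mul_assoc)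
    also have "\<dots> = R ** (Pbar ** Pi) ** Sq" by (simp add: RSq matrix_mul_assoc)
    also have "\<dots> = mat 1" by (simp add: PPi RSq)
    finally show "R ** Pbar ** R ** (Sq ** Pi ** Sq) = mat 1" .
  qed
  have Rinj: "inj ((*v) R)" by (rule inj_matrix_vector_mult[OF Rinv])
  have Qbarq: "x \<bullet> (Qbar *v x) = (R *v x) \<bullet> (Pbar *v (R *v x))" for x
  proof -
    have "x \<bullet> (Qbar *v x) = x \<bullet> (R *v (Pbar *v (R *v x)))" unfolding Qbar_def by (simp only: matrix_vector_mul_assoc[symmetric])
    also have "\<dots> = (R *v x) \<bullet> (Pbar *v (R *v x))" by (rule sym_inner[OF Rsym])
    finally show ?thesis .
  qed
  have Qbar_pd: "posdef Qbar" unfolding posdef_def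
  proof (intro conjI allI impI)
    show "sym_mat Qbar" unfolding Qbar_def by (rule sym_mul3[OF Pbar_sym Rsym])
    fix x :: "real^'n" assume "x \<noteq> 0"
    then have "R *v x \<noteq> 0" using Rinj by (metis injD matrix_vector_mult_0_right)
    then show "x \<bullet> (Qbar *v x) > 0" using Pbar_pd posdef_def Qbarq by auto
  qed
  have Qi_pd: "posdef Qi" unfolding Qi_def by (rule posdef_minv[OF Qbar_pd])
  have Qi_sym: "sym_mat Qi" using Qi_pd posdef_def by blast
  have QiPbar: "Qi ** Pbar = G"
  proof -
    have "Qi ** Pbar = Sq ** Pi ** (Sq ** Pbar)" unfolding Qi_eq by (simp add: matrix_mul_assoc)
    also have "\<dots> = Sq ** (Pi ** Pbar) ** Sq" unfolding comm by (simp add: matrix_mul_assoc)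
    also have "\<dots> = G" using PPi SqSq by simp
    finally show ?thesis .
  qed
  define X where "X = (ES k (\<lambda>S. R ** P S ** Qi ** P S ** R) :: real^'n^'n)"
  have X_sym: "sym_mat X" unfolding X_def
  proof (rule sym_ES)
    fix S
    have "sym_mat (P S ** Qi ** P S)" by (rule sym_mul3[OF Qi_sym Psym])
    then have "sym_mat (R ** (P S ** Qi ** P S) ** R)" by (rule sym_mul3[OF _ Rsym])
    then show "sym_mat (R ** P S ** Qi ** P S ** R)" by (simp add: matrix_mul_assoc)
  qed
  have Xq: "x \<bullet> (X *v x) = ES k (\<lambda>S. (P S *v (R *v x)) \<bullet> (Qi *v (P S *v (R *v x))))" for x
  proof -
    have "x \<bullet> (X *v x) = ES k (\<lambda>S. x \<bullet> ((R ** P S ** Qi ** P S ** R) *v x))" unfolding X_def by (simp add: ES_mv ES_inner)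
    also have "\<dots> = ES k (\<lambda>S. (P S *v (R *v x)) \<bullet> (Qi *v (P S *v (R *v x))))"
    proof -
      have "x \<bullet> ((R ** P S ** Qi ** P S ** R) *v x) = (P S *v (R *v x)) \<bullet> (Qi *v (P S *v (R *v x)))" for S
      proof -
        have "x \<bullet> ((R ** P S ** Qi ** P S ** R) *v x) = x \<bullet> (R *v (P S *v (Qi *v (P S *v (R *v x)))))"
          by (simp only: matrix_vector_mul_assoc[symmetric])
        also have "\<dots> = (R *v x) \<bullet> (P S *v (Qi *v (P S *v (R *v x))))" by (rule sym_inner[OF Rsym])
        also have "\<dots> = (P S *v (R *v x)) \<bullet> (Qi *v (P S *v (R *v x)))" by (rule sym_inner[OF Psym])
        finally show ?thesis .
      qed
      then show ?thesis by simp
    qed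
    finally show ?thesis .
  qed
  define lX where "lX = lambda_max X"
  define hmax where "hmax = lambda_max Ht"
  define hmin where "hmin = lambda_min Ht"
  define qmax where "qmax = lambda_max Qbar"
  define qmin where "qmin = lambda_min Qbar"
  define alpha where "alpha = lambda_min Pbar"
  define gamma where "gamma = 1 / lX"
  define eta where "eta = gamma / hmax"
  define rho where "rho = 1 - (1 / kappa Ht) * alpha * gamma"
  have qmin_pos: "qmin > 0" unfolding qmin_def by (rule posdef_lmin[OF Qbar_pd])
  have hmin_pos: "hmin > 0" unfolding hmin_def by (rule posdef_lmin[OF Htpd])
  define w0 :: "real^'n" where "w0 = axis undefined 1"
  have w0: "w0 \<noteq> 0" unfolding w0_def by (simp add: vec_eq_iff axis_def)
  have hmin_le: "hmin \<le> hmax"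
  proof -
    have "hmin * (w0 \<bullet> w0) \<le> hmax * (w0 \<bullet> w0)"
      using rayleigh[OF Htsym, of w0] unfolding hmin_def hmax_def by linarith
    then show ?thesis using w0 by simp
  qed
  have hmax_pos: "hmax > 0" using hmin_pos hmin_le by linarith
  have X_le: "x \<bullet> (X *v x) \<le> (qmax / qmin) * (x \<bullet> x)" for x
  proof -
    have "x \<bullet> (X *v x) \<le> ES k (\<lambda>S. (1 / qmin) * ((R *v x) \<bullet> (P S *v (R *v x))))"
      unfolding Xq
    proof (rule ES_mono)
      fix S :: "'m set"
      have "(P S *v (R *v x)) \<bullet> (Qi *v (P S *v (R *v x))) \<le> (1 / qmin) * ((P S *v (R *v x)) \<bullet> (P S *v (R *v x)))"
        unfolding Qi_def qmin_def by (rule posdef_inv_bound[OF Qbar_pd])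
      also have "\<dots> \<le> (1 / qmin) * ((R *v x) \<bullet> (P S *v (R *v x)))"
        using Ppsd qmin_pos by (intro mult_left_mono) auto
      finally show "(P S *v (R *v x)) \<bullet> (Qi *v (P S *v (R *v x))) \<le> (1 / qmin) * ((R *v x) \<bullet> (P S *v (R *v x)))" .
    qed
    also have "\<dots> = (1 / qmin) * ((R *v x) \<bullet> (Pbar *v (R *v x)))"
      unfolding ES_cmult Pbar_ES ES_inner ..
    also have "\<dots> = (1 / qmin) * (x \<bullet> (Qbar *v x))" using Qbarq by simp
    also have "\<dots> \<le> (1 / qmin) * (qmax * (x \<bullet> x))"
      using rayleigh(1)[OF sym_mul3[OF Pbar_sym Rsym], of x] qmin_pos unfolding Qbar_def[symmetric] qmax_def
      by (intro mult_left_mono) auto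
    finally show ?thesis by simp
  qed
  have lX_le: "lX \<le> qmax / qmin" unfolding lX_def by (rule lmax_le[OF X_sym X_le])
  have lX_pos: "lX > 0"
  proof -
    define x where "x = Sq *v w0"
    have Rx: "R *v x = w0" unfolding x_def by (simp add: matrix_vector_mul_assoc RSq)
    have "Pbar *v w0 \<noteq> 0"
      using w0 inj_matrix_vector_mult[OF Pbar_inv] by (metis injD matrix_vector_mult_0_right)
    then have "ES k (\<lambda>S. P S *v w0) \<noteq> 0" using Pbar_ES by simp
    then obtain S where S: "S \<in> batches k" "P S *v w0 \<noteq> 0" unfolding ES_def by (metis (no_types, lifting) scaleR_eq_0_iff sum.neutral)
    have "x \<bullet> (X *v x) = (\<Sum>S\<in>batches k. (P S *v w0) \<bullet> (Qi *v (P S *v w0))) / real (card (batches k :: 'm set set))"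
      unfolding Xq Rx ES_real ..
    also have "\<dots> > 0"
    proof (rule divide_pos_pos)
      show "real (card (batches k :: 'm set set)) > 0" using Ppos by simp
      show "(\<Sum>S\<in>batches k. (P S *v w0) \<bullet> (Qi *v (P S *v w0))) > 0"
      proof (rule sum_pos2[OF _ S(1)])
        show "finite (batches k :: 'm set set)" by simp
        show "0 < (P S *v w0) \<bullet> (Qi *v (P S *v w0))" using S(2) Qi_pd posdef_def by blast
        show "\<And>T. T \<in> batches k \<Longrightarrow> 0 \<le> (P T *v w0) \<bullet> (Qi *v (P T *v w0))" using Qi_pd posdef_psd by blast
      qed
    qed
    finally have pos: "x \<bullet> (X *v x) > 0" .
    have "x \<bullet> (X *v x) \<le> lX * (x \<bullet> x)" unfolding lX_def by (rule rayleigh(1)[OF X_sym])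
    then have "lX * (x \<bullet> x) > 0" using pos by linarith
    then show ?thesis
    proof (rule contrapos_pp)
      assume "\<not> lX > 0"
      then have "lX \<le> 0" by simp
      then show "\<not> lX * (x \<bullet> x) > 0" using mult_nonpos_nonneg[of lX "x \<bullet> x"] by simp
    qed
  qed
  have partA: "gamma \<ge> 1 / kappa Qbar"
  proof -
    have "kappa Qbar = qmax / qmin" unfolding kappa_def qmax_def qmin_def ..
    moreover have "1 / (qmax / qmin) \<le> 1 / lX"
    proof -
      have "qmax / qmin > 0" using lX_le lX_pos by linarith
      then have "0 < (qmax / qmin) * lX" using lX_pos by (rule mult_pos_pos)
      then show ?thesis using divide_left_mono[OF lX_le, of 1] by simp
    qed
    ultimately show ?thesis unfolding gamma_def by simp
  qed
  define F where "F th = sqnorm_in Qi (th - thstar)" for th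
  have qz: "H *v (J *v thstar) + q = 0"
  proof -
    define v0 where "v0 = J *v thstar"
    define d where "d = H *v v0 + q"
    have "2 * t * (- (d \<bullet> d)) + t^2 * (- (d \<bullet> (H *v d))) \<le> 0" for t
    proof -
      have "quadloss H q c v0 \<le> quadloss H q c (v0 + t *\<^sub>R d)" using cons1 unfolding v0_def by blast
      moreover have "quadloss H q c (v0 + t *\<^sub>R d) = quadloss H q c v0 + t * (d \<bullet> d) + t^2 / 2 * (d \<bullet> (H *v d))"
      proof -
        have s1: "v0 \<bullet> (H *v d) = d \<bullet> (H *v v0)" using sym_inner[OF Hsym, of v0 d] by (simp add: inner_commute)
        have s2: "d \<bullet> (H *v v0) + d \<bullet> q = d \<bullet> d"
        proof -
          have "d \<bullet> (H *v v0 + q) = d \<bullet> d" by (simp only: d_def[symmetric])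
          then show ?thesis by (simp add: inner_add_right)
        qed
        have "quadloss H q c (v0 + t *\<^sub>R d) = quadloss H q c v0 + t * (d \<bullet> (H *v v0) + d \<bullet> q) + t^2 / 2 * (d \<bullet> (H *v d))"
          unfolding quadloss_def using s1
          by (simp add: matrix_vector_right_distrib matrix_vector_mult_scaleR inner_add_left inner_add_right
              algebra_simps power2_eq_square inner_commute)
        then show ?thesis unfolding s2 .
      qed
      ultimately have "0 \<le> t * (d \<bullet> d) + t^2 / 2 * (d \<bullet> (H *v d))" by linarith
      then show ?thesis by (simp add: algebra_simps)
    qed
    then have "- (d \<bullet> d) = 0" by (rule quad_zero)
    then show ?thesis unfolding d_def v0_def by simp
  qed
  have step_eq: "sngd_step eta lam J H q S th - thstar = (th - thstar) - eta *\<^sub>R (P S *v (M *v (th - thstar)))" for S th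
  proof -
    have "H *v (J *v th) + q = H *v (J *v th) - H *v (J *v thstar)" using qz by (simp add: eq_neg_iff_add_eq_0 algebra_simps)
    also have "\<dots> = (H ** J) *v (th - thstar)" by (simp add: matrix_vector_mul_assoc[symmetric] matrix_vector_mult_diff_distrib)
    also have "\<dots> = J *v (M *v (th - thstar))" by (simp add: JM[symmetric] matrix_vector_mul_assoc)
    finally have h: "H *v (J *v th) + q = J *v (M *v (th - thstar))" .
    have hp: "JS_rpinv lam J S *v (rowsel S *v (J *v (M *v (th - thstar)))) = P S *v (M *v (th - thstar))"
      unfolding P_def projP_def by (simp add: matrix_vector_mul_assoc matrix_mul_assoc)
    show ?thesis unfolding sngd_step_def h hp by (simp only: diff_diff_eq add.commute)
  qed
  have onestep: "ES k (\<lambda>S. F (sngd_step eta lam J H q S th)) \<le> rho * F th" for th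
  proof -
    define e where "e = th - thstar"
    define w where "w = M *v e"
    define u where "u = Sq *v e"
    define V0 where "V0 = e \<bullet> (Qi *v e)"
    define c0 where "c0 = (J *v e) \<bullet> (H *v (J *v e))"
    have Fstep: "F (sngd_step eta lam J H q S th) = V0 - eta * (e \<bullet> (Qi *v (P S *v w))) - eta * ((P S *v w) \<bullet> (Qi *v e))
        + eta^2 * ((P S *v w) \<bullet> (Qi *v (P S *v w)))" for S
      unfolding F_def sqnorm_in_def step_eq e_def[symmetric] w_def[symmetric] V0_def
      by (simp add: matrix_vector_mult_diff_distrib matrix_vector_mult_scaleR inner_diff_left inner_diff_right
          algebra_simps power2_eq_square)
    have f1: "e \<bullet> (Qi *v (P S *v w)) = (Qi *v e) \<bullet> (P S *v w)" for S by (rule sym_inner[OF Qi_sym])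
    have f2: "(P S *v w) \<bullet> (Qi *v e) = (Qi *v e) \<bullet> (P S *v w)" for S by (rule inner_commute)
    have Ef1: "ES k (\<lambda>S. (Qi *v e) \<bullet> (P S *v w)) = c0"
    proof -
      have "ES k (\<lambda>S. (Qi *v e) \<bullet> (P S *v w)) = (Qi *v e) \<bullet> (Pbar *v w)" unfolding Pbar_ES ES_inner ..
      also have "\<dots> = e \<bullet> (Qi *v (Pbar *v w))" by (rule sym_inner[OF Qi_sym, symmetric])
      also have "\<dots> = e \<bullet> ((G ** M) *v e)" by (simp add: matrix_vector_mul_assoc matrix_mul_assoc QiPbar w_def)
      also have "\<dots> = e \<bullet> (transpose J *v (H *v (J *v e)))" by (simp only: GM matrix_vector_mul_assoc[symmetric])
      also have "\<dots> = (transpose (transpose J) *v e) \<bullet> (H *v (J *v e))" by (rule inner_mv_transpose)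
      also have "\<dots> = c0" unfolding c0_def by (simp only: transpose_transpose)
      finally show ?thesis .
    qed
    have Rw: "R *v (Sq *v w) = w" by (simp add: matrix_vector_mul_assoc RSq)
    have Ef3: "ES k (\<lambda>S. (P S *v w) \<bullet> (Qi *v (P S *v w))) = (Sq *v w) \<bullet> (X *v (Sq *v w))"
      unfolding Xq Rw ..
    have Sqw: "Sq *v w = Ht *v u" unfolding w_def u_def by (simp add: matrix_vector_mul_assoc SqM)
    have c0u: "c0 = u \<bullet> (Ht *v u)" unfolding c0_def u_def Htq ..
    have V0u: "V0 = u \<bullet> (Pi *v u)"
    proof -
      have "V0 = e \<bullet> (Sq *v (Pi *v (Sq *v e)))" unfolding V0_def Qi_eq by (simp only: matrix_vector_mul_assoc[symmetric])
      also have "\<dots> = u \<bullet> (Pi *v u)" unfolding u_def by (rule sym_inner[OF Sqsym])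
      finally show ?thesis .
    qed
    define T where "T = (Ht *v u) \<bullet> (X *v (Ht *v u))"
    have ESF: "ES k (\<lambda>S. F (sngd_step eta lam J H q S th)) = V0 - 2 * eta * c0 + eta^2 * T"
    proof -
      have "ES k (\<lambda>S. F (sngd_step eta lam J H q S th)) =
        ES k (\<lambda>S. V0 - eta * ((Qi *v e) \<bullet> (P S *v w)) - eta * ((Qi *v e) \<bullet> (P S *v w))
          + eta^2 * ((P S *v w) \<bullet> (Qi *v (P S *v w))))"
        unfolding Fstep f1 f2 ..
      also have "\<dots> = V0 - eta * c0 - eta * c0 + eta^2 * T"
        unfolding ES_add ES_diff ES_cmult ES_const[OF bs_ne] Ef1 Ef3 Sqw T_def ..
      finally show ?thesis by simp
    qed
    have T_le: "T \<le> lX * ((Ht *v u) \<bullet> (Ht *v u))" unfolding T_def lX_def by (rule rayleigh(1)[OF X_sym])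
    have Ht_psd: "\<And>x. x \<bullet> (Ht *v x) \<ge> 0" using Htpd by (rule posdef_psd)
    have Hu_le: "(Ht *v u) \<bullet> (Ht *v u) \<le> hmax * c0" unfolding c0u hmax_def by (rule psd_normsq(1)[OF Htsym Ht_psd])
    have c0_ge: "hmin * (u \<bullet> u) \<le> c0" unfolding c0u hmin_def by (rule rayleigh(2)[OF Htsym])
    have Pbar_psd: "\<And>x. x \<bullet> (Pbar *v x) \<ge> 0" using Pbar_pd by (rule posdef_psd)
    have uu_ge: "alpha * V0 \<le> u \<bullet> u"
    proof -
      have "alpha * ((Pi *v u) \<bullet> (Pbar *v (Pi *v u))) \<le> (Pbar *v (Pi *v u)) \<bullet> (Pbar *v (Pi *v u))"
        unfolding alpha_def by (rule psd_normsq(2)[OF Pbar_sym Pbar_psd])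
      moreover have "Pbar *v (Pi *v u) = u" by (simp add: matrix_vector_mul_assoc PPi)
      ultimately show ?thesis unfolding V0u by (simp add: inner_commute)
    qed
    have eta_nn: "eta \<ge> 0" unfolding eta_def gamma_def using lX_pos hmax_pos by simp
    have key: "eta * lX * hmax = 1" unfolding eta_def gamma_def using lX_pos hmax_pos by simp
    have "eta^2 * T \<le> eta^2 * (lX * (hmax * c0))"
    proof -
      have "T \<le> lX * (hmax * c0)" using T_le Hu_le lX_pos by (meson less_imp_le mult_left_mono order_trans)
      then show ?thesis by (intro mult_left_mono) auto
    qed
    also have "\<dots> = eta * c0" using key by (simp add: power2_eq_square algebra_simps)
    finally have t1: "eta^2 * T \<le> eta * c0" .
    have "hmin * (alpha * V0) \<le> hmin * (u \<bullet> u)" using uu_ge hmin_pos by (intro mult_left_mono) auto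
    then have c0_ge2: "hmin * alpha * V0 \<le> c0" using c0_ge by (simp add: mult.assoc)
    have t2: "eta * (hmin * alpha * V0) \<le> eta * c0" using c0_ge2 eta_nn by (rule mult_left_mono)
    have kap: "1 / kappa Ht = hmin / hmax" unfolding kappa_def hmin_def hmax_def by simp
    have rhoV: "rho * V0 = V0 - eta * (hmin * alpha * V0)"
      unfolding rho_def kap eta_def by (simp add: algebra_simps)
    have "ES k (\<lambda>S. F (sngd_step eta lam J H q S th)) \<le> rho * V0" using ESF t1 t2 rhoV by linarith
    then show ?thesis unfolding F_def sqnorm_in_def V0_def e_def .
  qed
  have F_nn: "F th \<ge> 0" for th unfolding F_def sqnorm_in_def using Qi_pd by (rule posdef_psd)
  have rho_nn: "rho \<ge> 0"
  proof -
    define th1 where "th1 = thstar + w0"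
    have "w0 \<bullet> (Qi *v w0) > 0" using w0 Qi_pd unfolding posdef_def by blast
    then have "F th1 > 0" unfolding F_def sqnorm_in_def th1_def by simp
    moreover have "0 \<le> ES k (\<lambda>S. F (sngd_step eta lam J H q S th1))" by (rule ES_nonneg) (rule F_nn)
    then have "0 \<le> rho * F th1" using onestep[of th1] by linarith
    ultimately show ?thesis by (simp add: zero_le_mult_iff)
  qed
  have partB: "E_seq k t (\<lambda>Ss. F (sngd_iter eta lam J H q Ss th0)) \<le> rho ^ t * F th0" for t th0
  proof (induction t arbitrary: th0)
    case 0
    then show ?case by (simp add: E_seq_0)
  next
    case (Suc t)
    have "E_seq k (Suc t) (\<lambda>Ss. F (sngd_iter eta lam J H q Ss th0))
        = ES k (\<lambda>S. E_seq k t (\<lambda>Ss. F (sngd_iter eta lam J H q Ss (sngd_step eta lam J H q S th0))))"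
      by (simp add: E_seq_Suc)
    also have "\<dots> \<le> ES k (\<lambda>S. rho ^ t * F (sngd_step eta lam J H q S th0))"
      by (rule ES_mono) (rule Suc.IH)
    also have "\<dots> = rho ^ t * ES k (\<lambda>S. F (sngd_step eta lam J H q S th0))" by (rule ES_cmult)
    also have "\<dots> \<le> rho ^ t * (rho * F th0)" using onestep rho_nn by (intro mult_left_mono) auto
    finally show ?case by (simp add: mult_ac)
  qed
  show ?thesis
    unfolding Let_def
    using partA partB
    unfolding F_def rho_def eta_def gamma_def lX_def X_def Qi_def Qbar_def alpha_def hmax_def Ht_def R_def Sq_def G_def Pbar_def P_def
    by simp
qed

end
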